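(* Let $\nu>0$, $\sigma\neq 0$, $l\neq 0$ and $c\in\mathbb{R}$. Let $\Theta:\mathbb{R}\to\mathbb{R}$ be a (deterministic) $C^2$ function and let $h:\mathbb{R}\times[0,\infty)\to\mathbb{R}$ be a deterministic function which is $C^2$ in its first argument $b$ and $C^1$ in its second argument $t$, and which vanishes nowhere. Let $(\beta_t)_{t\ge0}$ be a standard one-dimensional Brownian motion and define the random field $$\Upsilon(x,t)=\Theta(lx-ct)\,h(\beta_t,t).$$ Suppose that $\Upsilon$ solves the stochastic Burgers equation with linear multiplicative noise in the Itô sense, i.e. for every $x\in\mathbb{R}$, almost surely, for all $t\ge0$, $$\Upsilon(x,t)=\Upsilon(x,0)+\int_0^t\big[\nu\Upsilon_{xx}(x,s)-\Upsilon(x,s)\Upsilon_x(x,s)\big]\,ds+\sigma\int_0^t\Upsilon(x,s)\,d\beta_s .$$ Then $\Theta$ is constant. In particular, the Ansatz $\Upsilon(x,t)=\Theta(lx-ct)e^{\sigma\beta_t-\frac{\sigma^2}{2}t}$ with deterministic $\Theta$ yields only spatially homogeneous solutions, and no nonconstant solution of the deterministic travelling wave equation $\nu\Theta''+c\Theta'-\Theta\Theta'=0$ multiplied by $e^{\sigma\beta_t-\frac{\sigma^2}{2}t}$ solves this stochastic Burgers equation.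
   Context: The integral $\int_0^t\cdot\,d\beta_s$ is the Itô stochastic integral. Subscripts $x$ denote partial derivatives in $x$. *)

theory Defs
  imports "HOL-Probability.Probability"
begin

definition std_brownian_motion :: "'a measure \<Rightarrow> (real \<Rightarrow> 'a \<Rightarrow> real) \<Rightarrow> bool" where
  "std_brownian_motion M B \<longleftrightarrow>
     prob_space M \<and>
     (\<forall>t\<ge>0. B t \<in> borel_measurable M) \<and>
     (AE \<omega> in M. B 0 \<omega> = 0 \<and> continuous_on {0..} (\<lambda>t. B t \<omega>)) \<and>
     (\<forall>s t. 0 \<le> s \<longrightarrow> s < t \<longrightarrow>
        distributed M lborel (\<lambda>\<omega>. B t \<omega> - B s \<omega>)
          (\<lambda>x. ennreal (normal_density 0 (sqrt (t - s)) x))) \<and>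
     (\<forall>(ts :: nat \<Rightarrow> real) n. 0 \<le> ts 0 \<and> (\<forall>i<n. ts i < ts (Suc i)) \<longrightarrow>
        prob_space.indep_vars M (\<lambda>_. borel) (\<lambda>i \<omega>. B (ts (Suc i)) \<omega> - B (ts i) \<omega>) {..<n})"

definition ito_sum :: "(real \<Rightarrow> 'a \<Rightarrow> real) \<Rightarrow> (real \<Rightarrow> 'a \<Rightarrow> real) \<Rightarrow> real \<Rightarrow> nat \<Rightarrow> 'a \<Rightarrow> real" where
  "ito_sum Y B t n \<omega> =
     (\<Sum>k<n. Y (real k * t / real n) \<omega> *
        (B (real (Suc k) * t / real n) \<omega> - B (real k * t / real n) \<omega>))"

definition is_ito_integral :: "'a measure \<Rightarrow> (real \<Rightarrow> 'a \<Rightarrow> real) \<Rightarrow> (real \<Rightarrow> 'a \<Rightarrow> real)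
     \<Rightarrow> (real \<Rightarrow> 'a \<Rightarrow> real) \<Rightarrow> bool" where
  "is_ito_integral M B Y J \<longleftrightarrow>
     (\<forall>t\<ge>0. J t \<in> borel_measurable M \<and>
        (\<forall>\<epsilon>>0. (\<lambda>n. measure M {\<omega> \<in> space M. \<bar>ito_sum Y B t n \<omega> - J t \<omega>\<bar> > \<epsilon>})
                  \<longlonglongrightarrow> 0))"

end

theory Submission
  imports Defs
begin


locale bmx =
  fixes M :: "'a measure" and B :: "real \<Rightarrow> 'a \<Rightarrow> real"
  assumes BM: "std_brownian_motion M B"

sublocale bmx \<subseteq> prob_space M
  using BM unfolding std_brownian_motion_def by auto

context bmx
begin

lemma Bmeas[measurable]: "0 \<le> t \<Longrightarrow> B t \<in> borel_measurable M"
  using BM unfolding std_brownian_motion_def by auto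

lemma AE0: "AE \<omega> in M. B 0 \<omega> = 0 \<and> continuous_on {0..} (\<lambda>t. B t \<omega>)"
  using BM unfolding std_brownian_motion_def by auto

lemma incr_dist: "0 \<le> s \<Longrightarrow> s < t \<Longrightarrow>
   distributed M lborel (\<lambda>\<omega>. B t \<omega> - B s \<omega>) (\<lambda>x. ennreal (normal_density 0 (sqrt (t - s)) x))"
  using BM unfolding std_brownian_motion_def by auto

lemma incr_indep: assumes "0 < d"
  shows "indep_vars (\<lambda>_. borel) (\<lambda>i \<omega>. B (real (Suc i) * d) \<omega> - B (real i * d) \<omega>) {..<K}"
proof -
  have "\<forall>(ts :: nat \<Rightarrow> real) n. 0 \<le> ts 0 \<and> (\<forall>i<n. ts i < ts (Suc i)) \<longrightarrow>
        indep_vars (\<lambda>_. borel) (\<lambda>i \<omega>. B (ts (Suc i)) \<omega> - B (ts i) \<omega>) {..<n}"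
    using BM unfolding std_brownian_motion_def by auto
  from spec[OF spec[OF this, of "\<lambda>i. real i * d"], of K] show ?thesis
    using assms by (auto simp: field_simps)
qed

lemma incr_mom:
  assumes "0 \<le> s" "s < t"
  shows "integrable M (\<lambda>\<omega>. B t \<omega> - B s \<omega>)"
    and "expectation (\<lambda>\<omega>. B t \<omega> - B s \<omega>) = 0"
    and "integrable M (\<lambda>\<omega>. (B t \<omega> - B s \<omega>)^2)"
    and "expectation (\<lambda>\<omega>. (B t \<omega> - B s \<omega>)^2) = t - s"
proof -
  note D = incr_dist[OF assms]
  have sp: "0 < sqrt (t - s)" using assms by simp
  show i1: "integrable M (\<lambda>\<omega>. B t \<omega> - B s \<omega>)"
    using distributed_integrable[OF D, of "\<lambda>x. x"] integrable_normal_moment[OF sp, of 0 1] by simp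
  show e1: "expectation (\<lambda>\<omega>. B t \<omega> - B s \<omega>) = 0"
    using normal_distributed_expectation[OF sp D] .
  show "integrable M (\<lambda>\<omega>. (B t \<omega> - B s \<omega>)^2)"
    using distributed_integrable[OF D, of "\<lambda>x. x^2"] integrable_normal_moment[OF sp, of 0 2] by simp
  have "variance (\<lambda>\<omega>. B t \<omega> - B s \<omega>) = (sqrt (t - s))^2"
    using normal_distributed_variance[OF sp D] .
  then show "expectation (\<lambda>\<omega>. (B t \<omega> - B s \<omega>)^2) = t - s"
    using e1 assms by simp
qed

end


lemma (in prob_space) decseq_null_tendsto:
  assumes "range A \<subseteq> events" "decseq A" "(\<Inter>i. A i) \<subseteq> N" "N \<in> null_sets M"
  shows "(\<lambda>n. prob (A n)) \<longlonglongrightarrow> 0"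
proof -
  have "(\<lambda>n. prob (A n)) \<longlonglongrightarrow> prob (\<Inter>i. A i)"
    by (rule finite_Lim_measure_decseq[OF assms(1,2)])
  moreover have "prob (\<Inter>i. A i) = 0"
  proof -
    have "(\<Inter>i. A i) \<in> events" using assms(1) by auto
    then have "prob (\<Inter>i. A i) \<le> prob N"
      using assms(3,4) by (intro finite_measure_mono) auto
    moreover have "prob N = 0" using assms(4) by (simp add: measure_eq_0_null_sets)
    ultimately show ?thesis using measure_nonneg[of M "\<Inter>i. A i"] by linarith
  qed
  ultimately show ?thesis by simp
qed

context bmx
begin

lemma nd_le: assumes "0 < sg" shows "normal_density 0 sg x \<le> 1 / sqrt (2 * pi * sg^2)"
proof -
  have "exp (- (x - 0)\<^sup>2 / (2 * sg\<^sup>2)) \<le> 1" using assms by simp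
  then show ?thesis unfolding normal_density_def
    by (intro mult_left_le) auto
qed

lemma small_ball:
  assumes "0 \<le> s" "s < t" "0 \<le> a"
  shows "prob {\<omega> \<in> space M. \<bar>B t \<omega> - B s \<omega>\<bar> \<le> a} \<le> a / sqrt (t - s)"
proof -
  note D = incr_dist[OF assms(1,2)]
  define sg where "sg = sqrt (t - s)"
  have sg: "0 < sg" "sg^2 = t - s" using assms by (auto simp: sg_def)
  have sgeq: "sqrt (t - s) = sg" by (simp add: sg_def)
  define c where "c = 1 / sqrt (2 * pi * sg^2)"
  have c: "0 \<le> c" by (simp add: c_def)
  have set: "{\<omega> \<in> space M. \<bar>B t \<omega> - B s \<omega>\<bar> \<le> a} = (\<lambda>\<omega>. B t \<omega> - B s \<omega>) -` {-a..a} \<inter> space M"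
    by auto
  have "emeasure M ((\<lambda>\<omega>. B t \<omega> - B s \<omega>) -` {-a..a} \<inter> space M)
        = (\<integral>\<^sup>+x. ennreal (normal_density 0 (sqrt (t - s)) x) * indicator {-a..a} x \<partial>lborel)"
    by (rule distributed_emeasure[OF D]) simp
  also have "\<dots> \<le> (\<integral>\<^sup>+x. ennreal c * indicator {-a..a} x \<partial>lborel)"
    by (intro nn_integral_mono mult_right_mono) (use nd_le[OF sg(1)] in \<open>auto simp: c_def sgeq\<close>)
  also have "\<dots> = ennreal c * ennreal (2 * a)"
    using assms by (simp add: nn_integral_cmult_indicator)
  also have "\<dots> = ennreal (c * (2 * a))" using c assms by (simp add: ennreal_mult)
  finally have le: "emeasure M ((\<lambda>\<omega>. B t \<omega> - B s \<omega>) -` {-a..a} \<inter> space M) \<le> ennreal (c * (2 * a))" .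
  have "prob ((\<lambda>\<omega>. B t \<omega> - B s \<omega>) -` {-a..a} \<inter> space M) \<le> c * (2 * a)"
    using le c assms by (simp add: emeasure_eq_measure ennreal_le_iff)
  also have "c * (2 * a) \<le> a / sqrt (t - s)"
  proof -
    have c_eq: "c = 1 / (sqrt (2 * pi) * sg)" using sg(1) by (simp add: c_def real_sqrt_mult)
    have s2: "2 \<le> sqrt (2 * pi)"
    proof -
      have "sqrt 4 \<le> sqrt (2 * pi)" using pi_gt3 by (intro real_sqrt_le_mono) simp
      then show ?thesis by simp
    qed
    have "c * (2 * a) = a / sg * (2 / sqrt (2 * pi))" by (simp add: c_eq field_simps)
    also have "\<dots> \<le> a / sg * 1"
      using s2 sg(1) assms by (intro mult_left_mono) auto
    finally show ?thesis by (simp add: sgeq)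
  qed
  finally show ?thesis using set by simp
qed

lemma tail_bound:
  assumes "0 \<le> s" "s < t" "0 < a"
  shows "prob {\<omega> \<in> space M. \<bar>B t \<omega> - B s \<omega>\<bar> \<ge> a} \<le> (t - s) / a^2"
proof -
  have "prob {\<omega> \<in> space M. \<bar>B t \<omega> - B s \<omega>\<bar> \<ge> a} \<le> expectation (\<lambda>\<omega>. (B t \<omega> - B s \<omega>)^2) / a^2"
    using assms incr_mom(3)[OF assms(1,2)] by (intro second_moment_method) auto
  then show ?thesis using incr_mom(4)[OF assms(1,2)] by simp
qed

lemma pos_prob:
  assumes "0 \<le> s" "s < t" "u < v"
  shows "0 < prob {\<omega> \<in> space M. u < B t \<omega> - B s \<omega> \<and> B t \<omega> - B s \<omega> < v}"
proof -
  note D = incr_dist[OF assms(1,2)]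
  define sg where "sg = sqrt (t - s)"
  have sg: "0 < sg" "sg^2 = t - s" using assms by (auto simp: sg_def)
  define R where "R = max \<bar>u\<bar> \<bar>v\<bar>"
  define m where "m = 1 / sqrt (2 * pi * sg^2) * exp (- (R^2) / (2 * sg^2))"
  have m: "0 < m" using sg(1) by (simp add: m_def)
  have low: "m \<le> normal_density 0 sg x" if "x \<in> {u<..<v}" for x
  proof -
    have "\<bar>x\<bar> \<le> R" using that by (auto simp: R_def)
    then have "x^2 \<le> R^2" by (metis abs_ge_zero power2_abs power_mono)
    then have "- (R^2) / (2 * sg^2) \<le> - (x^2) / (2 * sg^2)" using sg(1) by (simp add: divide_right_mono)
    then show ?thesis unfolding m_def normal_density_def
      by (intro mult_left_mono) auto
  qed
  have set: "{\<omega> \<in> space M. u < B t \<omega> - B s \<omega> \<and> B t \<omega> - B s \<omega> < v} = (\<lambda>\<omega>. B t \<omega> - B s \<omega>) -` {u<..<v} \<inter> space M"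
    by auto
  have "ennreal (m * (v - u)) = ennreal m * ennreal (v - u)" using m assms by (simp add: ennreal_mult)
  also have "\<dots> = (\<integral>\<^sup>+x. ennreal m * indicator {u<..<v} x \<partial>lborel)"
    using assms by (simp add: nn_integral_cmult_indicator)
  also have "\<dots> \<le> (\<integral>\<^sup>+x. ennreal (normal_density 0 (sqrt (t - s)) x) * indicator {u<..<v} x \<partial>lborel)"
    by (intro nn_integral_mono) (auto simp: indicator_def sg_def[symmetric] intro!: low)
  also have "\<dots> = emeasure M ((\<lambda>\<omega>. B t \<omega> - B s \<omega>) -` {u<..<v} \<inter> space M)"
    by (rule distributed_emeasure[OF D, symmetric]) simp
  finally have "ennreal (m * (v - u)) \<le> ennreal (prob ((\<lambda>\<omega>. B t \<omega> - B s \<omega>) -` {u<..<v} \<inter> space M))"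
    by (simp add: emeasure_eq_measure)
  then have "m * (v - u) \<le> prob ((\<lambda>\<omega>. B t \<omega> - B s \<omega>) -` {u<..<v} \<inter> space M)"
    by (simp add: ennreal_le_iff)
  moreover have "0 < m * (v - u)" using m assms by simp
  ultimately show ?thesis using set by simp
qed

end


definition fadapted :: "(nat \<Rightarrow> 'a \<Rightarrow> real) \<Rightarrow> nat set \<Rightarrow> ('a \<Rightarrow> real) \<Rightarrow> bool" where
  "fadapted D I X \<longleftrightarrow> (\<exists>f \<in> borel_measurable (PiM I (\<lambda>_. borel)). \<forall>\<omega>. X \<omega> = f (restrict (\<lambda>i. D i \<omega>) I))"

lemma fad_const: "fadapted D I (\<lambda>\<omega>. c)"
  unfolding fadapted_def by (rule bexI[of _ "\<lambda>_. c"]) auto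

lemma fad_var: "i \<in> I \<Longrightarrow> fadapted D I (D i)"
  unfolding fadapted_def
  by (rule bexI[of _ "\<lambda>v. v i"]) (auto intro: measurable_component_singleton)

lemma fad_map: "fadapted D I X \<Longrightarrow> g \<in> borel_measurable borel \<Longrightarrow> fadapted D I (\<lambda>\<omega>. g (X \<omega>))"
  unfolding fadapted_def
  by (elim bexE, rule_tac x="\<lambda>v. g (f v)" in bexI) auto

lemma fad_add: "fadapted D I X \<Longrightarrow> fadapted D I Y \<Longrightarrow> fadapted D I (\<lambda>\<omega>. X \<omega> + Y \<omega>)"
  unfolding fadapted_def
  by (elim bexE, rule_tac x="\<lambda>v. f v + fa v" in bexI) auto

lemma fad_diff: "fadapted D I X \<Longrightarrow> fadapted D I Y \<Longrightarrow> fadapted D I (\<lambda>\<omega>. X \<omega> - Y \<omega>)"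
  unfolding fadapted_def
  by (elim bexE, rule_tac x="\<lambda>v. f v - fa v" in bexI) auto

lemma fad_mult: "fadapted D I X \<Longrightarrow> fadapted D I Y \<Longrightarrow> fadapted D I (\<lambda>\<omega>. X \<omega> * Y \<omega>)"
  unfolding fadapted_def
  by (elim bexE, rule_tac x="\<lambda>v. f v * fa v" in bexI) auto

lemma fad_sum: "finite A \<Longrightarrow> (\<And>j. j \<in> A \<Longrightarrow> fadapted D I (X j)) \<Longrightarrow> fadapted D I (\<lambda>\<omega>. \<Sum>j\<in>A. X j \<omega>)"
  by (induction A rule: finite_induct) (auto intro: fad_add fad_const)

lemma fad_prod: "finite A \<Longrightarrow> (\<And>j. j \<in> A \<Longrightarrow> fadapted D I (X j)) \<Longrightarrow> fadapted D I (\<lambda>\<omega>. \<Prod>j\<in>A. X j \<omega>)"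
  by (induction A rule: finite_induct) (auto intro: fad_mult fad_const)

lemma fad_mono: assumes "I \<subseteq> I'" "fadapted D I X" shows "fadapted D I' X"
proof -
  obtain f where f: "f \<in> borel_measurable (PiM I (\<lambda>_. borel))" "\<And>\<omega>. X \<omega> = f (restrict (\<lambda>i. D i \<omega>) I)"
    using assms(2) unfolding fadapted_def by blast
  show ?thesis unfolding fadapted_def
  proof (rule bexI[of _ "\<lambda>v. f (restrict v I)"])
    show "(\<lambda>v. f (restrict v I)) \<in> borel_measurable (PiM I' (\<lambda>_. borel))"
      using measurable_comp[OF measurable_restrict_subset[OF assms(1)] f(1)] by (simp add: comp_def)
    show "\<forall>\<omega>. X \<omega> = f (restrict (restrict (\<lambda>i. D i \<omega>) I') I)"
      using f(2) assms(1) by (simp add: restrict_restrict Int_absorb1)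
  qed
qed

lemma fad_measurable:
  assumes "\<And>i. i \<in> I \<Longrightarrow> D i \<in> borel_measurable M" "fadapted D I X"
  shows "X \<in> borel_measurable M"
proof -
  obtain f where f: "f \<in> borel_measurable (PiM I (\<lambda>_. borel))" "\<And>\<omega>. X \<omega> = f (restrict (\<lambda>i. D i \<omega>) I)"
    using assms(2) unfolding fadapted_def by blast
  have "(\<lambda>\<omega>. restrict (\<lambda>i. D i \<omega>) I) \<in> measurable M (PiM I (\<lambda>_. borel))"
    using assms(1) by (intro measurable_restrict) auto
  have eqX: "X = (\<lambda>\<omega>. f (restrict (\<lambda>i. D i \<omega>) I))" using f(2) by (simp add: fun_eq_iff)
  from measurable_comp[OF \<open>(\<lambda>\<omega>. restrict (\<lambda>i. D i \<omega>) I) \<in> measurable M (PiM I (\<lambda>_. borel))\<close> f(1)] show ?thesis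
    by (simp add: comp_def eqX)
qed



context prob_space
begin

lemma fad_indep_var:
  assumes ind: "indep_vars (\<lambda>_. borel) D I0" and sub: "I \<subseteq> I0" "I' \<subseteq> I0" "I \<inter> I' = {}"
    and X: "fadapted D I X" and W: "fadapted D I' W"
  shows "indep_var borel X borel W"
proof -
  obtain f where f: "f \<in> borel_measurable (PiM I (\<lambda>_. borel))" "\<And>\<omega>. X \<omega> = f (restrict (\<lambda>i. D i \<omega>) I)"
    using X unfolding fadapted_def by blast
  obtain g where g: "g \<in> borel_measurable (PiM I' (\<lambda>_. borel))" "\<And>\<omega>. W \<omega> = g (restrict (\<lambda>i. D i \<omega>) I')"
    using W unfolding fadapted_def by blast
  have "indep_var (PiM I (\<lambda>_. borel)) (\<lambda>\<omega>. restrict (\<lambda>i. D i \<omega>) I) (PiM I' (\<lambda>_. borel)) (\<lambda>\<omega>. restrict (\<lambda>i. D i \<omega>) I')"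
    by (rule indep_var_restrict[OF ind sub(3,1,2)])
  from indep_var_compose[OF this f(1) g(1)]
  have "indep_var borel (f \<circ> (\<lambda>\<omega>. restrict (\<lambda>i. D i \<omega>) I)) borel (g \<circ> (\<lambda>\<omega>. restrict (\<lambda>i. D i \<omega>) I'))" .
  moreover have "f \<circ> (\<lambda>\<omega>. restrict (\<lambda>i. D i \<omega>) I) = X" using f(2) by (simp add: fun_eq_iff)
  moreover have "g \<circ> (\<lambda>\<omega>. restrict (\<lambda>i. D i \<omega>) I') = W" using g(2) by (simp add: fun_eq_iff)
  ultimately show ?thesis by simp
qed

lemma fad_indep_prod:
  assumes ind: "indep_vars (\<lambda>_. borel) D I0" and sub: "I \<subseteq> I0" "k \<in> I0" "k \<notin> I"
    and F: "fadapted D I F" "integrable M F"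
    and g: "g \<in> borel_measurable borel" "integrable M (\<lambda>\<omega>. g (D k \<omega>))"
  shows "integrable M (\<lambda>\<omega>. F \<omega> * g (D k \<omega>))"
    and "expectation (\<lambda>\<omega>. F \<omega> * g (D k \<omega>)) = expectation F * expectation (\<lambda>\<omega>. g (D k \<omega>))"
proof -
  have "fadapted D {k} (\<lambda>\<omega>. g (D k \<omega>))" by (rule fad_map[OF fad_var g(1)]) simp
  then have iv: "indep_var borel F borel (\<lambda>\<omega>. g (D k \<omega>))"
    using sub by (intro fad_indep_var[OF ind _ _ _ F(1)]) auto
  show "integrable M (\<lambda>\<omega>. F \<omega> * g (D k \<omega>))" by (rule indep_var_integrable[OF iv F(2) g(2)])
  show "expectation (\<lambda>\<omega>. F \<omega> * g (D k \<omega>)) = expectation F * expectation (\<lambda>\<omega>. g (D k \<omega>))"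
    by (rule indep_var_lebesgue_integral[OF iv F(2) g(2)])
qed

lemma fad_indep_events:
  assumes ind: "indep_vars (\<lambda>_. borel) D I0" and sub: "I \<subseteq> I0" "I' \<subseteq> I0" "I \<inter> I' = {}"
    and X: "fadapted D I X" and W: "fadapted D I' W" and ST: "S \<in> sets borel" "T \<in> sets borel"
  shows "prob ({\<omega> \<in> space M. X \<omega> \<in> S} \<inter> {\<omega> \<in> space M. W \<omega> \<in> T})
         = prob {\<omega> \<in> space M. X \<omega> \<in> S} * prob {\<omega> \<in> space M. W \<omega> \<in> T}"
proof -
  have iv: "indep_var borel X borel W" by (rule fad_indep_var[OF ind sub X W])
  then have iset: "indep_set (sigma_sets (space M) { X -` A \<inter> space M | A. A \<in> sets borel})
      (sigma_sets (space M) { W -` A \<inter> space M | A. A \<in> sets borel})"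
    unfolding indep_var_eq by simp
  have a: "X -` S \<inter> space M \<in> sigma_sets (space M) { X -` A \<inter> space M | A. A \<in> sets borel}"
    using ST by (intro sigma_sets.Basic) blast
  have b: "W -` T \<inter> space M \<in> sigma_sets (space M) { W -` A \<inter> space M | A. A \<in> sets borel}"
    using ST by (intro sigma_sets.Basic) blast
  have "prob ((X -` S \<inter> space M) \<inter> (W -` T \<inter> space M)) = prob (X -` S \<inter> space M) * prob (W -` T \<inter> space M)"
    using iset a b unfolding indep_sets2_eq by blast
  moreover have "{\<omega> \<in> space M. X \<omega> \<in> S} = X -` S \<inter> space M" "{\<omega> \<in> space M. W \<omega> \<in> T} = W -` T \<inter> space M"
    by auto
  ultimately show ?thesis by simp
qed

end


context prob_space
begin

lemma iso_bound:
  assumes ind: "\<And>K. indep_vars (\<lambda>_. borel) D {..<K}"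
    and Dm: "\<And>i. D i \<in> borel_measurable M"
    and Di: "\<And>i. integrable M (D i)" "\<And>i. expectation (D i) = 0"
    and D2: "\<And>i. integrable M (\<lambda>\<omega>. (D i \<omega>)^2)" "\<And>i. expectation (\<lambda>\<omega>. (D i \<omega>)^2) = d"
    and a: "\<And>j. fadapted D {..<j} (a j)" "\<And>j \<omega>. \<bar>a j \<omega>\<bar> \<le> \<xi>"
  shows "integrable M (\<lambda>\<omega>. (\<Sum>j\<in>{k0..<k1}. a j \<omega> * D j \<omega>)^2) \<and>
         expectation (\<lambda>\<omega>. (\<Sum>j\<in>{k0..<k1}. a j \<omega> * D j \<omega>)^2) \<le> \<xi>^2 * d * real (k1 - k0)"
proof (induction k1)
  case 0
  then show ?case by simp
next
  case (Suc k)
  show ?case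
  proof (cases "k0 \<le> k")
    case False
    then have "{k0..<Suc k} = {}" by auto
    then show ?thesis by simp
  next
    case True
    define S where "S = (\<lambda>\<omega>. \<Sum>j\<in>{k0..<k}. a j \<omega> * D j \<omega>)"
    have am: "a j \<in> borel_measurable M" for j
      by (rule fad_measurable[OF _ a(1)]) (use Dm in auto)
    have d0: "0 \<le> d" using D2(2)[of 0, symmetric] by simp
    have Sfad: "fadapted D {..<k} S"
      unfolding S_def
    proof (rule fad_sum)
      fix j assume "j \<in> {k0..<k}"
      then show "fadapted D {..<k} (\<lambda>\<omega>. a j \<omega> * D j \<omega>)"
        by (intro fad_mult[OF fad_mono[OF _ a(1)[of j]] fad_var]) auto
    qed simp
    have Sm: "S \<in> borel_measurable M" unfolding S_def using am Dm by measurable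
    have Sa_int: "integrable M (\<lambda>\<omega>. S \<omega> * a k \<omega>)"
    proof (rule Bochner_Integration.integrable_bound)
      show "integrable M (\<lambda>\<omega>. \<Sum>j\<in>{k0..<k}. \<xi> * \<xi> * \<bar>D j \<omega>\<bar>)"
        by (rule Bochner_Integration.integrable_sum, rule integrable_mult_right, rule integrable_abs, rule Di(1))
      show "(\<lambda>\<omega>. S \<omega> * a k \<omega>) \<in> borel_measurable M" using Sm am by measurable
      show "AE \<omega> in M. norm (S \<omega> * a k \<omega>) \<le> norm (\<Sum>j\<in>{k0..<k}. \<xi> * \<xi> * \<bar>D j \<omega>\<bar>)"
      proof (intro AE_I2)
        fix \<omega>
        have "\<bar>S \<omega>\<bar> \<le> (\<Sum>j\<in>{k0..<k}. \<xi> * \<bar>D j \<omega>\<bar>)"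
          unfolding S_def
          by (rule order.trans[OF sum_abs]) (auto intro!: sum_mono simp: abs_mult intro: mult_right_mono a(2))
        moreover have "\<bar>a k \<omega>\<bar> \<le> \<xi>" by (rule a(2))
        ultimately have "\<bar>S \<omega> * a k \<omega>\<bar> \<le> (\<Sum>j\<in>{k0..<k}. \<xi> * \<bar>D j \<omega>\<bar>) * \<xi>"
          unfolding abs_mult by (intro mult_mono) (auto intro: sum_nonneg)
        also have "\<dots> = (\<Sum>j\<in>{k0..<k}. \<xi> * \<xi> * \<bar>D j \<omega>\<bar>)" by (simp add: sum_distrib_left sum_distrib_right ac_simps)
        finally show "norm (S \<omega> * a k \<omega>) \<le> norm (\<Sum>j\<in>{k0..<k}. \<xi> * \<xi> * \<bar>D j \<omega>\<bar>)"
          by (simp add: order.trans[OF _ abs_ge_self])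
      qed
    qed
    have Safad: "fadapted D {..<k} (\<lambda>\<omega>. S \<omega> * a k \<omega>)" by (intro fad_mult Sfad a(1))
    have cross_int: "integrable M (\<lambda>\<omega>. S \<omega> * a k \<omega> * D k \<omega>)"
      and cross_E0: "expectation (\<lambda>\<omega>. S \<omega> * a k \<omega> * D k \<omega>) = expectation (\<lambda>\<omega>. S \<omega> * a k \<omega>) * expectation (\<lambda>\<omega>. D k \<omega>)"
      using fad_indep_prod[OF ind[of "Suc k"], where I="{..<k}" and k=k and F="\<lambda>\<omega>. S \<omega> * a k \<omega>" and g="\<lambda>x. x"]
        Safad Sa_int Di(1) by auto
    have cross_E: "expectation (\<lambda>\<omega>. S \<omega> * a k \<omega> * D k \<omega>) = 0"
      using cross_E0 Di(2)[of k] by simp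
    have a2_int: "integrable M (\<lambda>\<omega>. (a k \<omega>)^2)"
      by (rule integrable_const_bound[where B="\<xi>^2"]) (use am a(2) in \<open>auto simp: abs_le_square_iff[symmetric] intro!: AE_I2 order.trans[OF a(2) abs_ge_self]\<close>)
    have a2fad: "fadapted D {..<k} (\<lambda>\<omega>. (a k \<omega>)^2)" by (rule fad_map[OF a(1)[of k]]) simp
    have sq_int: "integrable M (\<lambda>\<omega>. (a k \<omega>)^2 * (D k \<omega>)^2)"
      and sq_E: "expectation (\<lambda>\<omega>. (a k \<omega>)^2 * (D k \<omega>)^2) = expectation (\<lambda>\<omega>. (a k \<omega>)^2) * expectation (\<lambda>\<omega>. (D k \<omega>)^2)"
      using fad_indep_prod[OF ind[of "Suc k"], where I="{..<k}" and k=k and F="\<lambda>\<omega>. (a k \<omega>)^2" and g="\<lambda>x. x^2"]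
        a2fad a2_int D2(1) by auto
    have Ea2: "expectation (\<lambda>\<omega>. (a k \<omega>)^2) \<le> \<xi>^2"
    proof -
      have "expectation (\<lambda>\<omega>. (a k \<omega>)^2) \<le> expectation (\<lambda>\<omega>. \<xi>^2)"
        using a2_int a(2) by (intro integral_mono) (auto simp: abs_le_square_iff[symmetric] intro: order.trans[OF a(2) abs_ge_self])
      then show ?thesis by (simp add: prob_space)
    qed
    have IH: "integrable M (\<lambda>\<omega>. (S \<omega>)^2)" "expectation (\<lambda>\<omega>. (S \<omega>)^2) \<le> \<xi>^2 * d * real (k - k0)"
      using Suc.IH unfolding S_def by auto
    have eq: "(\<Sum>j\<in>{k0..<Suc k}. a j \<omega> * D j \<omega>)^2
        = (S \<omega>)^2 + 2 * (S \<omega> * a k \<omega> * D k \<omega>) + (a k \<omega>)^2 * (D k \<omega>)^2" for \<omega>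
      using True unfolding S_def by (simp add: power2_eq_square algebra_simps)
    have int: "integrable M (\<lambda>\<omega>. (S \<omega>)^2 + 2 * (S \<omega> * a k \<omega> * D k \<omega>) + (a k \<omega>)^2 * (D k \<omega>)^2)"
      using IH(1) cross_int sq_int by auto
    have "expectation (\<lambda>\<omega>. (S \<omega>)^2 + 2 * (S \<omega> * a k \<omega> * D k \<omega>) + (a k \<omega>)^2 * (D k \<omega>)^2)
        = expectation (\<lambda>\<omega>. (S \<omega>)^2) + 2 * expectation (\<lambda>\<omega>. S \<omega> * a k \<omega> * D k \<omega>)
          + expectation (\<lambda>\<omega>. (a k \<omega>)^2 * (D k \<omega>)^2)"
      using IH(1) cross_int sq_int by simp
    also have "\<dots> \<le> \<xi>^2 * d * real (k - k0) + 0 + \<xi>^2 * d"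
      using IH(2) cross_E sq_E D2(2)[of k] Ea2 d0 by (auto intro!: add_mono mult_right_mono)
    also have "\<dots> = \<xi>^2 * d * real (Suc k - k0)" using True by (simp add: Suc_diff_le algebra_simps)
    finally show ?thesis using int eq by simp
  qed
qed

end


lemma rat_dense_bound:
  fixes f :: "real \<Rightarrow> real"
  assumes cont: "continuous_on {0..} f" and t0: "0 < t0"
    and H: "\<And>r. r \<in> \<rat> \<Longrightarrow> 1 \<le> r \<Longrightarrow> r \<le> 2 \<Longrightarrow> \<bar>f (t0 * r)\<bar> \<le> K"
    and s: "t0 \<le> s" "s \<le> 2 * t0"
  shows "\<bar>f s\<bar> \<le> K"
proof (rule ccontr)
  assume "\<not> \<bar>f s\<bar> \<le> K"
  then have e: "0 < \<bar>f s\<bar> - K" by simp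
  have "s \<in> {0..}" using s t0 by simp
  then obtain d where d: "0 < d" "\<And>y. y \<in> {0..} \<Longrightarrow> dist y s < d \<Longrightarrow> dist (f y) (f s) < \<bar>f s\<bar> - K"
    using cont e unfolding continuous_on_iff by metis
  obtain r where r: "r \<in> \<rat>" "1 \<le> r" "r \<le> 2" "\<bar>t0 * r - s\<bar> < d"
  proof (cases "s < 2 * t0")
    case True
    define u where "u = s / t0"
    have u: "1 \<le> u" "u < 2" using s True t0 by (auto simp: u_def field_simps)
    obtain r where r: "r \<in> \<rat>" "u < r" "r < min 2 (u + d / t0)"
      using Rats_dense_in_real[of u "min 2 (u + d / t0)"] u d t0 by auto
    have "t0 * r - s = t0 * (r - u)" using t0 by (simp add: u_def field_simps)
    moreover have "t0 * (r - u) < d" using r t0 by (simp add: field_simps)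
    ultimately have "\<bar>t0 * r - s\<bar> < d" using r t0 by simp
    then show ?thesis using that r u by auto
  next
    case False
    then have "s = 2 * t0" using s by simp
    then show ?thesis using that[of 2] d by auto
  qed
  have "dist (f (t0 * r)) (f s) < \<bar>f s\<bar> - K"
    using d(2)[of "t0 * r"] r t0 by (auto simp: dist_real_def)
  moreover have "\<bar>f (t0 * r)\<bar> \<le> K" using H r by auto
  ultimately show False by (simp add: dist_real_def)
qed

lemma compact_bound2:
  fixes F :: "real \<Rightarrow> real \<Rightarrow> real"
  assumes cont: "continuous_on (UNIV \<times> {a..b}) (\<lambda>(x, s). F x s)"
  shows "\<exists>C. \<forall>x s. \<bar>x\<bar> \<le> K \<longrightarrow> s \<in> {a..b} \<longrightarrow> \<bar>F x s\<bar> \<le> C"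
proof -
  have sub: "cbox (-K, a) (K, b) \<subseteq> UNIV \<times> {a..b}" by (auto simp: cbox_Pair_eq)
  have "compact ((\<lambda>(x, s). F x s) ` cbox (-K, a) (K, b))"
    by (rule compact_continuous_image[OF continuous_on_subset[OF cont sub] compact_cbox])
  then obtain C where C: "\<forall>y \<in> (\<lambda>(x, s). F x s) ` cbox (-K, a) (K, b). norm y \<le> C"
    using compact_imp_bounded bounded_iff by metis
  show ?thesis
  proof (intro exI allI impI)
    fix x s assume "\<bar>x\<bar> \<le> K" "s \<in> {a..b}"
    then have "(x, s) \<in> cbox (-K, a) (K, b)" by (auto simp: cbox_Pair_eq)
    then show "\<bar>F x s\<bar> \<le> C" using C by force
  qed
qed

lemma compact_ucont2:
  fixes F :: "real \<Rightarrow> real \<Rightarrow> real"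
  assumes cont: "continuous_on (UNIV \<times> {a..b}) (\<lambda>(x, s). F x s)" and e: "0 < e"
  shows "\<exists>d>0. \<forall>x x' s s'. \<bar>x\<bar> \<le> K \<longrightarrow> \<bar>x'\<bar> \<le> K \<longrightarrow> s \<in> {a..b} \<longrightarrow> s' \<in> {a..b} \<longrightarrow>
            \<bar>x - x'\<bar> < d \<longrightarrow> \<bar>s - s'\<bar> < d \<longrightarrow> \<bar>F x s - F x' s'\<bar> < e"
proof -
  have sub: "cbox (-K, a) (K, b) \<subseteq> UNIV \<times> {a..b}" by (auto simp: cbox_Pair_eq)
  have "uniformly_continuous_on (cbox (-K, a) (K, b)) (\<lambda>(x, s). F x s)"
    by (rule compact_uniformly_continuous[OF continuous_on_subset[OF cont sub] compact_cbox])
  then obtain d where d: "0 < d" "\<And>p p'. p \<in> cbox (-K, a) (K, b) \<Longrightarrow> p' \<in> cbox (-K, a) (K, b) \<Longrightarrow>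
      dist p' p < d \<Longrightarrow> dist ((\<lambda>(x, s). F x s) p') ((\<lambda>(x, s). F x s) p) < e"
    unfolding uniformly_continuous_on_def using e by metis
  show ?thesis
  proof (intro exI[of _ "d / 2"] conjI allI impI)
    show "0 < d / 2" using d by simp
    fix x x' s s'
    assume h: "\<bar>x\<bar> \<le> K" "\<bar>x'\<bar> \<le> K" "s \<in> {a..b}" "s' \<in> {a..b}" "\<bar>x - x'\<bar> < d / 2" "\<bar>s - s'\<bar> < d / 2"
    have m: "(x, s) \<in> cbox (-K, a) (K, b)" "(x', s') \<in> cbox (-K, a) (K, b)" using h by (auto simp: cbox_Pair_eq)
    have "dist (x, s) (x', s') \<le> dist x x' + dist s s'"
      unfolding dist_Pair_Pair by (rule real_sqrt_sum_squares_triangle_ineq[of _ 0 0, simplified] | simp add: sqrt_sum_squares_le_sum_abs dist_real_def)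
    also have "\<dots> < d" using h by (simp add: dist_real_def)
    finally show "\<bar>F x s - F x' s'\<bar> < e" using d(2)[OF m(2) m(1)] by (simp add: dist_real_def)
  qed
qed



lemma (in prob_space) prob_Un_le: "A \<in> events \<Longrightarrow> B \<in> events \<Longrightarrow> prob (A \<union> B) \<le> prob A + prob B"
  by (rule measure_subadditive) (auto simp: emeasure_eq_measure)

context bmx
begin

definition Ebig :: "real \<Rightarrow> real \<Rightarrow> 'a set" where
  "Ebig t0 K = {\<omega> \<in> space M. \<exists>r\<in>\<rat>. 1 \<le> r \<and> r \<le> 2 \<and> K < \<bar>B (t0 * r) \<omega>\<bar>}"

definition Osc :: "real \<Rightarrow> nat \<Rightarrow> real \<Rightarrow> 'a set" where
  "Osc t0 m \<rho> = {\<omega> \<in> space M. \<exists>r\<in>\<rat>. 1 \<le> r \<and> r \<le> 1 + 1 / (real m + 1) \<and> \<rho> < \<bar>B (t0 * r) \<omega> - B t0 \<omega>\<bar>}"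

lemma Ebig_sets: assumes "0 < t0" shows "Ebig t0 K \<in> events"
proof -
  have "Ebig t0 K = (\<Union>r\<in>(\<rat>::real set) \<inter> {1..2}. {\<omega> \<in> space M. K < \<bar>B (t0 * r) \<omega>\<bar>})"
    unfolding Ebig_def by auto
  also have "\<dots> \<in> events"
  proof (rule sets.countable_UN'')
    show "countable ((\<rat>::real set) \<inter> {1..2})" using countable_rat by (rule countable_subset[rotated]) auto
    fix r :: real assume "r \<in> \<rat> \<inter> {1..2}"
    then have "0 \<le> t0 * r" using assms by auto
    then show "{\<omega> \<in> space M. K < \<bar>B (t0 * r) \<omega>\<bar>} \<in> events" by measurable
  qed
  finally show ?thesis .
qed

lemma Osc_sets: assumes "0 < t0" shows "Osc t0 m \<rho> \<in> events"
proof -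
  have "Osc t0 m \<rho> = (\<Union>r\<in>(\<rat>::real set) \<inter> {1..1 + 1 / (real m + 1)}. {\<omega> \<in> space M. \<rho> < \<bar>B (t0 * r) \<omega> - B t0 \<omega>\<bar>})"
    unfolding Osc_def by auto
  also have "\<dots> \<in> events"
  proof (rule sets.countable_UN'')
    show "countable ((\<rat>::real set) \<inter> {1..1 + 1 / (real m + 1)})" using countable_rat by (rule countable_subset[rotated]) auto
    fix r :: real assume "r \<in> \<rat> \<inter> {1..1 + 1 / (real m + 1)}"
    then have "0 \<le> t0 * r" using assms by auto
    moreover have "0 \<le> t0" using assms by simp
    ultimately show "{\<omega> \<in> space M. \<rho> < \<bar>B (t0 * r) \<omega> - B t0 \<omega>\<bar>} \<in> events" by measurable
  qed
  finally show ?thesis .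
qed

lemma AE0_null: obtains N where "N \<in> null_sets M"
  "\<And>\<omega>. \<omega> \<in> space M \<Longrightarrow> \<omega> \<notin> N \<Longrightarrow> B 0 \<omega> = 0 \<and> continuous_on {0..} (\<lambda>t. B t \<omega>)"
proof -
  obtain N where N: "{\<omega>\<in>space M. \<not> (B 0 \<omega> = 0 \<and> continuous_on {0..} (\<lambda>t. B t \<omega>))} \<subseteq> N"
    "emeasure M N = 0" "N \<in> sets M"
    by (rule AE_E[OF AE0])
  show ?thesis by (rule that[of N]) (use N in \<open>auto simp: null_sets_def\<close>)
qed

lemma Ebig_good:
  assumes "0 < t0" "\<omega> \<in> space M" "\<omega> \<notin> Ebig t0 K" "continuous_on {0..} (\<lambda>t. B t \<omega>)" "t0 \<le> s" "s \<le> 2 * t0"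
  shows "\<bar>B s \<omega>\<bar> \<le> K"
  by (rule rat_dense_bound[OF assms(4,1) _ assms(5,6)]) (use assms(2,3) in \<open>auto simp: Ebig_def not_less\<close>)

lemma Osc_good:
  assumes "\<omega> \<in> space M" "\<omega> \<notin> Osc t0 m \<rho>" "r \<in> \<rat>" "1 \<le> r" "r \<le> 1 + 1 / (real m + 1)"
  shows "\<bar>B (t0 * r) \<omega> - B t0 \<omega>\<bar> \<le> \<rho>"
  using assms by (auto simp: Osc_def not_less)

lemma Ebig_lim: assumes t0: "0 < t0" shows "(\<lambda>K::nat. prob (Ebig t0 (real K))) \<longlonglongrightarrow> 0"
proof -
  obtain N where N: "N \<in> null_sets M"
    "\<And>\<omega>. \<omega> \<in> space M \<Longrightarrow> \<omega> \<notin> N \<Longrightarrow> B 0 \<omega> = 0 \<and> continuous_on {0..} (\<lambda>t. B t \<omega>)"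
    using AE0_null by blast
  show ?thesis
  proof (rule decseq_null_tendsto[OF _ _ _ N(1)])
    show "range (\<lambda>K. Ebig t0 (real K)) \<subseteq> events" using Ebig_sets[OF t0] by auto
    show "decseq (\<lambda>K. Ebig t0 (real K))"
      unfolding decseq_def Ebig_def by force
    show "(\<Inter>K. Ebig t0 (real K)) \<subseteq> N"
    proof
      fix \<omega> assume w: "\<omega> \<in> (\<Inter>K. Ebig t0 (real K))"
      then have sp: "\<omega> \<in> space M" by (auto simp: Ebig_def)
      show "\<omega> \<in> N"
      proof (rule ccontr)
        assume "\<omega> \<notin> N"
        then have c: "continuous_on {0..} (\<lambda>t. B t \<omega>)" using N(2) sp by auto
        have "compact ((\<lambda>t. B t \<omega>) ` {t0..2*t0})"
          by (rule compact_continuous_image[OF continuous_on_subset[OF c] compact_Icc]) (use t0 in auto)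
        then obtain C where C: "\<forall>y\<in>(\<lambda>t. B t \<omega>) ` {t0..2*t0}. norm y \<le> C"
          using compact_imp_bounded bounded_iff by metis
        obtain K :: nat where K: "C < real K" using reals_Archimedean2 by blast
        have "\<omega> \<in> Ebig t0 (real K)" using w by auto
        then obtain r where r: "r \<in> \<rat>" "1 \<le> r" "r \<le> 2" "real K < \<bar>B (t0 * r) \<omega>\<bar>"
          unfolding Ebig_def by auto
        have "t0 * r \<in> {t0..2*t0}" using r t0 by auto
        then have "\<bar>B (t0 * r) \<omega>\<bar> \<le> C" using C by auto
        then show False using r K by simp
      qed
    qed
  qed
qed

lemma Osc_lim: assumes t0: "0 < t0" and rho: "0 < \<rho>" shows "(\<lambda>m. prob (Osc t0 m \<rho>)) \<longlonglongrightarrow> 0"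
proof -
  obtain N where N: "N \<in> null_sets M"
    "\<And>\<omega>. \<omega> \<in> space M \<Longrightarrow> \<omega> \<notin> N \<Longrightarrow> B 0 \<omega> = 0 \<and> continuous_on {0..} (\<lambda>t. B t \<omega>)"
    using AE0_null by blast
  show ?thesis
  proof (rule decseq_null_tendsto[OF _ _ _ N(1)])
    show "range (\<lambda>m. Osc t0 m \<rho>) \<subseteq> events" using Osc_sets[OF t0] by auto
    show "decseq (\<lambda>m. Osc t0 m \<rho>)"
    proof (rule decseq_SucI)
      fix m
      have "1 / (real (Suc m) + 1) \<le> 1 / (real m + 1)" by (simp add: frac_le)
      then show "Osc t0 (Suc m) \<rho> \<subseteq> Osc t0 m \<rho>" unfolding Osc_def by force
    qed
    show "(\<Inter>m. Osc t0 m \<rho>) \<subseteq> N"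
    proof
      fix \<omega> assume w: "\<omega> \<in> (\<Inter>m. Osc t0 m \<rho>)"
      then have sp: "\<omega> \<in> space M" by (auto simp: Osc_def)
      show "\<omega> \<in> N"
      proof (rule ccontr)
        assume "\<omega> \<notin> N"
        then have c: "continuous_on {0..} (\<lambda>t. B t \<omega>)" using N(2) sp by auto
        have "t0 \<in> {0..}" using t0 by simp
        then obtain d where d: "0 < d" "\<And>y. y \<in> {0..} \<Longrightarrow> dist y t0 < d \<Longrightarrow> dist (B y \<omega>) (B t0 \<omega>) < \<rho>"
          using c rho unfolding continuous_on_iff by metis
        obtain m :: nat where m: "t0 / d < real m" using reals_Archimedean2 by blast
        have "\<omega> \<in> Osc t0 m \<rho>" using w by auto
        then obtain r where r: "r \<in> \<rat>" "1 \<le> r" "r \<le> 1 + 1 / (real m + 1)" "\<rho> < \<bar>B (t0 * r) \<omega> - B t0 \<omega>\<bar>"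
          unfolding Osc_def by auto
        have "t0 * r - t0 = t0 * (r - 1)" by (simp add: algebra_simps)
        also have "\<dots> \<le> t0 * (1 / (real m + 1))" using r t0 by (intro mult_left_mono) auto
        also have "\<dots> < d"
        proof -
          have "t0 < d * (real m + 1)" using m d by (simp add: field_simps)
          then show ?thesis using d by (simp add: field_simps)
        qed
        finally have "dist (t0 * r) t0 < d" using r t0 by (simp add: dist_real_def)
        then have "dist (B (t0 * r) \<omega>) (B t0 \<omega>) < \<rho>" using d(2)[of "t0 * r"] r t0 by auto
        then show False using r by (simp add: dist_real_def)
      qed
    qed
  qed
qed

lemma ito_sum_meas:
  assumes Ym: "\<And>s. 0 \<le> s \<Longrightarrow> Y s \<in> borel_measurable M" and t: "0 \<le> t"
  shows "ito_sum Y B t n \<in> borel_measurable M"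
proof -
  have "(\<lambda>\<omega>. \<Sum>k<n. Y (real k * t / real n) \<omega> * (B (real (Suc k) * t / real n) \<omega> - B (real k * t / real n) \<omega>))
        \<in> borel_measurable M"
    using t by (intro borel_measurable_sum borel_measurable_times borel_measurable_diff Ym Bmeas) auto
  then show ?thesis unfolding ito_sum_def[abs_def] .
qed

lemma ito_sum_grid0:
  assumes "0 < m" "0 < N"
  shows "ito_sum Y B t0 (m * N) \<omega> =
    (\<Sum>k<m * N. Y (real k * (t0 / real (m * N))) \<omega> * (B (real (Suc k) * (t0 / real (m * N))) \<omega> - B (real k * (t0 / real (m * N))) \<omega>))"
  unfolding ito_sum_def by (simp add: field_simps)

lemma ito_sum_grid1:
  assumes "0 < m" "0 < N"
  shows "ito_sum Y B (t0 + t0 / real m) ((m + 1) * N) \<omega> =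
    (\<Sum>k<(m + 1) * N. Y (real k * (t0 / real (m * N))) \<omega> * (B (real (Suc k) * (t0 / real (m * N))) \<omega> - B (real k * (t0 / real (m * N))) \<omega>))"
proof -
  have aux: "c \<noteq> 0 \<Longrightarrow> b \<noteq> 0 \<Longrightarrow> d \<noteq> 0 \<Longrightarrow> (x * c / b) / (c * d) = x / (b * (d::real))" for x b c d
    by (simp add: field_simps)
  have e: "real j * (t0 + t0 / real m) / real ((m + 1) * N) = real j * (t0 / real (m * N))" for j
  proof -
    have den: "real ((m+1)*N) = (real m + 1) * real N" by (simp add: algebra_simps)
    have num: "real j * (t0 + t0/real m) = (real j * t0) * (real m + 1) / real m" using assms by (simp add: field_simps)
    have "real j * (t0 + t0 / real m) / real ((m + 1) * N) = ((real j * t0) * (real m + 1) / real m) / ((real m + 1) * real N)"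
      unfolding den num ..
    also have "\<dots> = real j * t0 / (real m * real N)"
      by (rule aux) (use assms in auto)
    finally show ?thesis by simp
  qed
  show ?thesis unfolding ito_sum_def e by simp
qed

lemma ito_sum_diff:
  assumes "0 < m" "0 < N"
  shows "ito_sum Y B (t0 + t0 / real m) ((m + 1) * N) \<omega> - ito_sum Y B t0 (m * N) \<omega> =
    (\<Sum>k\<in>{m * N..<(m + 1) * N}. Y (real k * (t0 / real (m * N))) \<omega> * (B (real (Suc k) * (t0 / real (m * N))) \<omega> - B (real k * (t0 / real (m * N))) \<omega>))"
proof -
  define f where "f k = Y (real k * (t0 / real (m * N))) \<omega> * (B (real (Suc k) * (t0 / real (m * N))) \<omega> - B (real k * (t0 / real (m * N))) \<omega>)" for k
  have "sum f {0..<m * N} + sum f {m * N..<(m + 1) * N} = sum f {0..<(m + 1) * N}"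
    by (rule sum.atLeastLessThan_concat) auto
  then show ?thesis
    unfolding ito_sum_grid0[OF assms] ito_sum_grid1[OF assms] f_def[symmetric]
    by (simp add: lessThan_atLeast0 algebra_simps)
qed

lemma Rconv:
  assumes J: "is_ito_integral M B Y J" and Ym: "\<And>s. 0 \<le> s \<Longrightarrow> Y s \<in> borel_measurable M"
    and t0: "0 < t0" and m: "0 < m" and e: "0 < e" and eta: "0 < \<eta>"
  shows "\<exists>N0>0. \<forall>N\<ge>N0. prob {\<omega> \<in> space M. e < \<bar>J (t0 + t0 / real m) \<omega> - J t0 \<omega> -
      (\<Sum>k\<in>{m * N..<(m + 1) * N}. Y (real k * (t0 / real (m * N))) \<omega> *
          (B (real (Suc k) * (t0 / real (m * N))) \<omega> - B (real k * (t0 / real (m * N))) \<omega>))\<bar>} < \<eta>"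
proof -
  define t1 where "t1 = t0 + t0 / real m"
  have t1: "0 \<le> t1" using t0 m by (simp add: t1_def)
  have Jm: "J t \<in> borel_measurable M" if "0 \<le> t" for t using J that unfolding is_ito_integral_def by auto
  have c: "(\<lambda>n. prob {\<omega> \<in> space M. \<bar>ito_sum Y B t n \<omega> - J t \<omega>\<bar> > e / 2}) \<longlonglongrightarrow> 0" if "0 \<le> t" for t
  proof -
    have "\<forall>\<epsilon>>0. (\<lambda>n. prob {\<omega> \<in> space M. \<epsilon> < \<bar>ito_sum Y B t n \<omega> - J t \<omega>\<bar>}) \<longlonglongrightarrow> 0"
      using J that unfolding is_ito_integral_def by auto
    note h = this
    show ?thesis by (rule mp[OF spec[OF h, of "e/2"]]) (use e in simp)
  qed
  obtain n0 where n0: "\<And>n. n \<ge> n0 \<Longrightarrow> prob {\<omega> \<in> space M. \<bar>ito_sum Y B t0 n \<omega> - J t0 \<omega>\<bar> > e / 2} < \<eta> / 2"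
    using order_tendstoD(2)[OF c[of t0], of "\<eta> / 2"] t0 eta unfolding eventually_sequentially by auto
  obtain n1 where n1: "\<And>n. n \<ge> n1 \<Longrightarrow> prob {\<omega> \<in> space M. \<bar>ito_sum Y B t1 n \<omega> - J t1 \<omega>\<bar> > e / 2} < \<eta> / 2"
    using order_tendstoD(2)[OF c[OF t1], of "\<eta> / 2"] eta unfolding eventually_sequentially by auto
  show ?thesis
  proof (intro exI[of _ "max 1 (max n0 n1)"] conjI allI impI)
    show "0 < max 1 (max n0 n1)" by simp
    fix N assume N: "max 1 (max n0 n1) \<le> N"
    then have N0: "0 < N" by simp
    define A0 where "A0 = {\<omega> \<in> space M. \<bar>ito_sum Y B t0 (m * N) \<omega> - J t0 \<omega>\<bar> > e / 2}"
    define A1 where "A1 = {\<omega> \<in> space M. \<bar>ito_sum Y B t1 ((m + 1) * N) \<omega> - J t1 \<omega>\<bar> > e / 2}"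
    have t0': "0 \<le> t0" using t0 by simp
    have A0s: "A0 \<in> events" unfolding A0_def
      using ito_sum_meas[OF Ym t0', where n="m * N"] Jm[OF t0'] by measurable
    have A1s: "A1 \<in> events" unfolding A1_def
      using ito_sum_meas[OF Ym t1, where n="(m + 1) * N"] Jm[OF t1] by measurable
    have sub: "{\<omega> \<in> space M. e < \<bar>J (t0 + t0 / real m) \<omega> - J t0 \<omega> -
      (\<Sum>k\<in>{m * N..<(m + 1) * N}. Y (real k * (t0 / real (m * N))) \<omega> *
          (B (real (Suc k) * (t0 / real (m * N))) \<omega> - B (real k * (t0 / real (m * N))) \<omega>))\<bar>} \<subseteq> A0 \<union> A1"
    proof
      fix \<omega> assume w: "\<omega> \<in> {\<omega> \<in> space M. e < \<bar>J (t0 + t0 / real m) \<omega> - J t0 \<omega> -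
      (\<Sum>k\<in>{m * N..<(m + 1) * N}. Y (real k * (t0 / real (m * N))) \<omega> *
          (B (real (Suc k) * (t0 / real (m * N))) \<omega> - B (real k * (t0 / real (m * N))) \<omega>))\<bar>}"
      then have "e < \<bar>J t1 \<omega> - J t0 \<omega> - (ito_sum Y B t1 ((m + 1) * N) \<omega> - ito_sum Y B t0 (m * N) \<omega>)\<bar>"
        unfolding t1_def ito_sum_diff[OF m N0] by simp
      then have "e / 2 < \<bar>ito_sum Y B t0 (m * N) \<omega> - J t0 \<omega>\<bar> \<or> e / 2 < \<bar>ito_sum Y B t1 ((m + 1) * N) \<omega> - J t1 \<omega>\<bar>"
        by arith
      then show "\<omega> \<in> A0 \<union> A1" using w unfolding A0_def A1_def by blast
    qed
    have "N \<le> m * N" "N \<le> (m + 1) * N" using m by simp_all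
    then have "m * N \<ge> n0" "(m + 1) * N \<ge> n1" using N by linarith+
    then have "prob A0 < \<eta> / 2" "prob A1 < \<eta> / 2" unfolding A0_def A1_def using n0 n1 by auto
    moreover have "prob (A0 \<union> A1) \<le> prob A0 + prob A1" by (rule prob_Un_le[OF A0s A1s])
    ultimately have "prob (A0 \<union> A1) < \<eta>" by simp
    then show "prob {\<omega> \<in> space M. e < \<bar>J (t0 + t0 / real m) \<omega> - J t0 \<omega> -
      (\<Sum>k\<in>{m * N..<(m + 1) * N}. Y (real k * (t0 / real (m * N))) \<omega> *
          (B (real (Suc k) * (t0 / real (m * N))) \<omega> - B (real k * (t0 / real (m * N))) \<omega>))\<bar>} < \<eta>"
      using finite_measure_mono[OF sub sets.Un[OF A0s A1s]] by simp
  qed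
qed

end


lemma mvt_between:
  fixes f f' :: "real \<Rightarrow> real"
  assumes der: "\<And>x. min a b \<le> x \<Longrightarrow> x \<le> max a b \<Longrightarrow> DERIV f x :> f' x"
  shows "\<exists>z. min a b \<le> z \<and> z \<le> max a b \<and> f b - f a = (b - a) * f' z"
proof (cases a b rule: linorder_cases)
  case less
  then obtain z where "a < z" "z < b" "f b - f a = (b - a) * f' z"
    using MVT2[of a b f f'] der by auto
  then show ?thesis using less by (intro exI[of _ z]) auto
next
  case equal
  then show ?thesis by (intro exI[of _ a]) auto
next
  case greater
  then obtain z where "b < z" "z < a" "f a - f b = (a - b) * f' z"
    using MVT2[of b a f f'] der by auto
  then show ?thesis using greater by (intro exI[of _ z]) (auto simp: algebra_simps)
qed

lemma cont_slice:
  fixes F :: "real \<Rightarrow> real \<Rightarrow> real"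
  assumes "continuous_on (UNIV \<times> S) (\<lambda>(b, s). F b s)" "s \<in> S"
  shows "continuous_on UNIV (\<lambda>b. F b s)"
proof -
  have "continuous_on UNIV (\<lambda>b. (b, s))" by (intro continuous_intros)
  from continuous_on_compose2[OF assms(1) this] show ?thesis using assms(2) by auto
qed

lemma borel_slice:
  fixes F :: "real \<Rightarrow> real \<Rightarrow> real"
  assumes "continuous_on (UNIV \<times> S) (\<lambda>(b, s). F b s)" "s \<in> S"
  shows "(\<lambda>b. F b s) \<in> borel_measurable borel"
  by (rule borel_measurable_continuous_onI[OF cont_slice[OF assms]])

lemma path_cont:
  fixes F :: "real \<Rightarrow> real \<Rightarrow> real"
  assumes "continuous_on (UNIV \<times> {0..}) (\<lambda>(b, s). F b s)" "continuous_on {0..} p"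
  shows "continuous_on {0..} (\<lambda>s. F (p s) s)"
proof -
  have "continuous_on {0..} (\<lambda>s. (p s, s))" by (intro continuous_intros assms(2))
  from continuous_on_compose2[OF assms(1) this] show ?thesis by auto
qed

lemma integral_diff_bound:
  fixes f :: "real \<Rightarrow> real"
  assumes cont: "continuous_on {0..} f" and t: "0 \<le> t0" "t0 \<le> t1"
    and bd: "\<And>s. t0 \<le> s \<Longrightarrow> s \<le> t1 \<Longrightarrow> \<bar>f s - c\<bar> \<le> C"
  shows "\<bar>integral {0..t1} f - integral {0..t0} f - (t1 - t0) * c\<bar> \<le> C * (t1 - t0)"
proof -
  have int: "f integrable_on {0..t1}"
    by (rule integrable_continuous_interval[OF continuous_on_subset[OF cont]]) auto
  have "integral {0..t0} f + integral {t0..t1} f = integral {0..t1} f"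
    by (rule Henstock_Kurzweil_Integration.integral_combine[OF t int])
  moreover have "integral {t0..t1} (\<lambda>s. f s - c) = integral {t0..t1} f - (t1 - t0) * c"
  proof -
    have "f integrable_on {t0..t1}" by (rule integrable_on_subinterval[OF int]) (use t in auto)
    then have "integral {t0..t1} (\<lambda>s. f s - c) = integral {t0..t1} f - integral {t0..t1} (\<lambda>s. c)"
      by (rule Henstock_Kurzweil_Integration.integral_diff[OF _ integrable_const_ivl])
    then show ?thesis using t by simp
  qed
  moreover have "norm (integral {t0..t1} (\<lambda>s. f s - c)) \<le> C * (t1 - t0)"
    by (rule integral_bound[OF t(2)]) (use bd t in \<open>auto intro!: continuous_intros continuous_on_subset[OF cont]\<close>)
  ultimately show ?thesis by (simp add: algebra_simps)
qed

lemma telescope_grid: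
  fixes g :: "real \<Rightarrow> real"
  assumes "a \<le> b"
  shows "(\<Sum>k\<in>{a..<b}. g (real (Suc k) * d) - g (real k * d)) = g (real b * d) - g (real a * d)"
  using assms
proof (induction b)
  case 0 then show ?case by simp
next
  case (Suc b)
  show ?case
  proof (cases "a = Suc b")
    case True then show ?thesis by simp
  next
    case False
    then have "a \<le> b" using Suc.prems by simp
    then show ?thesis using Suc.IH by simp
  qed
qed



context bmx
begin

definition inc :: "real \<Rightarrow> nat \<Rightarrow> 'a \<Rightarrow> real" where
  "inc d i \<omega> = B (real (Suc i) * d) \<omega> - B (real i * d) \<omega>"

definition psum :: "real \<Rightarrow> nat \<Rightarrow> 'a \<Rightarrow> real" where
  "psum d j \<omega> = (\<Sum>i<j. inc d i \<omega>)"

lemma psum_eq: "psum d j \<omega> = B (real j * d) \<omega> - B 0 \<omega>"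
proof -
  have "psum d j \<omega> = (\<Sum>i\<in>{0..<j}. B (real (Suc i) * d) \<omega> - B (real i * d) \<omega>)"
    unfolding psum_def inc_def by (simp add: lessThan_atLeast0)
  also have "\<dots> = B (real j * d) \<omega> - B (real 0 * d) \<omega>"
    by (rule telescope_grid[of 0 j "\<lambda>t. B t \<omega>"]) simp
  finally show ?thesis by simp
qed

lemma inc_facts:
  assumes d: "0 < d"
  shows "\<And>K. indep_vars (\<lambda>_. borel) (inc d) {..<K}"
    and "\<And>i. inc d i \<in> borel_measurable M"
    and "\<And>i. integrable M (inc d i)" "\<And>i. expectation (inc d i) = 0"
    and "\<And>i. integrable M (\<lambda>\<omega>. (inc d i \<omega>)^2)" "\<And>i. expectation (\<lambda>\<omega>. (inc d i \<omega>)^2) = d"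
proof -
  show "indep_vars (\<lambda>_. borel) (inc d) {..<K}" for K
    using incr_indep[OF d, of K] unfolding inc_def[abs_def] .
  have s: "0 \<le> real i * d" "real i * d < real (Suc i) * d" for i using d by auto
  show "inc d i \<in> borel_measurable M" for i
  proof -
    have "0 \<le> real (Suc i) * d" "0 \<le> real i * d" using d by auto
    then show ?thesis unfolding inc_def[abs_def] by measurable
  qed
  show "integrable M (inc d i)" for i using incr_mom(1)[OF s[of i]] unfolding inc_def[abs_def] .
  show "expectation (inc d i) = 0" for i using incr_mom(2)[OF s[of i]] unfolding inc_def[abs_def] .
  show "integrable M (\<lambda>\<omega>. (inc d i \<omega>)^2)" for i using incr_mom(3)[OF s[of i]] unfolding inc_def[abs_def] .
  show "expectation (\<lambda>\<omega>. (inc d i \<omega>)^2) = d" for i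
    using incr_mom(4)[OF s[of i]] unfolding inc_def[abs_def] by (simp add: algebra_simps)
qed

lemma fad_psum: "j \<le> k \<Longrightarrow> fadapted (inc d) {..<k} (psum d j)"
  unfolding psum_def by (rule fad_sum) (auto intro: fad_var)

lemma trunc_prob:
  fixes G :: "real \<Rightarrow> real \<Rightarrow> real" and k0 k1 :: nat and \<xi> d c :: real
  assumes Gm: "\<And>s. 0 \<le> s \<Longrightarrow> (\<lambda>b. G b s) \<in> borel_measurable borel"
    and d: "0 < d" and c: "0 < c" and xi: "0 \<le> \<xi>"
  defines "dj \<equiv> \<lambda>j \<omega>. G (psum d j \<omega>) (real j * d) - G (psum d k0 \<omega>) (real k0 * d)"
  defines "Et \<equiv> \<lambda>\<omega>. \<Sum>j\<in>{k0..<k1}. (dj j \<omega> * (\<Prod>i\<in>{k0..j}. indicator {-\<xi>..\<xi>} (dj i \<omega>))) * inc d j \<omega>"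
  shows "Et \<in> borel_measurable M" and "prob {\<omega> \<in> space M. c \<le> \<bar>Et \<omega>\<bar>} \<le> \<xi>^2 * d * real (k1 - k0) / c^2"
proof -
  note F = inc_facts[OF d]
  define a where "a = (\<lambda>j \<omega>. if k0 \<le> j then dj j \<omega> * (\<Prod>i\<in>{k0..j}. indicator {-\<xi>..\<xi>} (dj i \<omega>) :: real) else 0)"
  have djfad: "fadapted (inc d) {..<j} (dj i)" if "i \<le> j" "k0 \<le> j" for i j
    unfolding dj_def
    by (intro fad_diff fad_map[OF fad_psum] Gm) (use that d in auto)
  have afad: "fadapted (inc d) {..<j} (a j)" for j
  proof (cases "k0 \<le> j")
    case True
    have "fadapted (inc d) {..<j} (\<lambda>\<omega>. dj j \<omega> * (\<Prod>i\<in>{k0..j}. indicator {-\<xi>..\<xi>} (dj i \<omega>) :: real))"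
    proof (rule fad_mult[OF djfad[OF order.refl True]])
      show "fadapted (inc d) {..<j} (\<lambda>\<omega>. \<Prod>i\<in>{k0..j}. indicator {-\<xi>..\<xi>} (dj i \<omega>) :: real)"
        by (rule fad_prod) (auto intro!: fad_map[OF djfad] simp: True)
    qed
    then show ?thesis using True unfolding a_def by simp
  next
    case False
    then show ?thesis unfolding a_def by (simp add: fad_const)
  qed
  have abd: "\<bar>a j \<omega>\<bar> \<le> \<xi>" for j \<omega>
  proof (cases "k0 \<le> j")
    case True
    show ?thesis
    proof (cases "\<forall>i\<in>{k0..j}. dj i \<omega> \<in> {-\<xi>..\<xi>}")
      case True
      then have "(\<Prod>i\<in>{k0..j}. indicator {-\<xi>..\<xi>} (dj i \<omega>) :: real) = 1"
        by (intro prod.neutral) auto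
      moreover have "dj j \<omega> \<in> {-\<xi>..\<xi>}" using True \<open>k0 \<le> j\<close> by auto
      ultimately show ?thesis using \<open>k0 \<le> j\<close> unfolding a_def by auto
    next
      case False
      then obtain i where i: "i \<in> {k0..j}" "dj i \<omega> \<notin> {-\<xi>..\<xi>}" by auto
      have p0: "(\<Prod>i\<in>{k0..j}. indicator {-\<xi>..\<xi>} (dj i \<omega>) :: real) = 0"
        by (rule prod_zero) (use i in \<open>auto intro!: bexI[of _ i]\<close>)
      have "a j \<omega> = 0" unfolding a_def using p0 by simp
      then show ?thesis using xi by simp
    qed
  next
    case False
    then show ?thesis using xi unfolding a_def by auto
  qed
  have iso: "integrable M (\<lambda>\<omega>. (\<Sum>j\<in>{k0..<k1}. a j \<omega> * inc d j \<omega>)^2) \<and>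
         expectation (\<lambda>\<omega>. (\<Sum>j\<in>{k0..<k1}. a j \<omega> * inc d j \<omega>)^2) \<le> \<xi>^2 * d * real (k1 - k0)"
    by (rule iso_bound[OF F(1) F(2) F(3) F(4) F(5) F(6) afad abd])
  have EtA: "Et = (\<lambda>\<omega>. \<Sum>j\<in>{k0..<k1}. a j \<omega> * inc d j \<omega>)"
    unfolding Et_def a_def by (intro ext sum.cong) auto
  have am: "a j \<in> borel_measurable M" for j by (rule fad_measurable[OF _ afad]) (use F(2) in auto)
  show Etm: "Et \<in> borel_measurable M" unfolding EtA using am F(2) by measurable
  have "prob {\<omega> \<in> space M. c \<le> \<bar>Et \<omega>\<bar>} \<le> expectation (\<lambda>\<omega>. (Et \<omega>)^2) / c^2"
    by (rule second_moment_method[OF Etm _ c]) (use iso EtA in simp)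
  also have "\<dots> \<le> \<xi>^2 * d * real (k1 - k0) / c^2"
    using iso c unfolding EtA by (intro divide_right_mono) auto
  finally show "prob {\<omega> \<in> space M. c \<le> \<bar>Et \<omega>\<bar>} \<le> \<xi>^2 * d * real (k1 - k0) / c^2" .
qed

end


context bmx
begin

lemma S1:
  fixes G Gb Gt D :: "real \<Rightarrow> real \<Rightarrow> real" and \<sigma> t0 :: real and J :: "real \<Rightarrow> 'a \<Rightarrow> real"
  assumes t0: "0 < t0" and sig: "\<sigma> \<noteq> 0"
    and Gb: "\<And>b s. 0 < s \<Longrightarrow> ((\<lambda>b. G b s) has_real_derivative Gb b s) (at b)"
    and Gt: "\<And>b s. 0 < s \<Longrightarrow> ((\<lambda>s. G b s) has_real_derivative Gt b s) (at s)"
    and Gc: "continuous_on (UNIV \<times> {0..}) (\<lambda>(b, s). G b s)"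
    and Gbc: "continuous_on (UNIV \<times> {0<..}) (\<lambda>(b, s). Gb b s)"
    and Gtc: "continuous_on (UNIV \<times> {0<..}) (\<lambda>(b, s). Gt b s)"
    and Dc: "continuous_on (UNIV \<times> {0..}) (\<lambda>(b, s). D b s)"
    and J: "is_ito_integral M B (\<lambda>s \<omega>. G (B s \<omega>) s) J"
    and eq: "AE \<omega> in M. \<forall>t\<ge>0. G (B t \<omega>) t = G (B 0 \<omega>) 0 + integral {0..t} (\<lambda>s. D (B s \<omega>) s) + \<sigma> * J t \<omega>"
  shows "Gb b t0 = \<sigma> * G b t0"
proof -
  define A where "A \<omega> = Gb (B t0 \<omega>) t0 - \<sigma> * G (B t0 \<omega>) t0" for \<omega>
  have t0': "0 \<le> t0" using t0 by simp
  have Gm: "\<And>s. 0 \<le> s \<Longrightarrow> (\<lambda>b. G b s) \<in> borel_measurable borel" using borel_slice[OF Gc] by auto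
  have Gbm: "(\<lambda>b. Gb b t0) \<in> borel_measurable borel" using borel_slice[OF Gbc] t0 by auto
  have Bt0m[measurable]: "B t0 \<in> borel_measurable M" using t0' by (rule Bmeas)
  have Am[measurable]: "A \<in> borel_measurable M"
    unfolding A_def[abs_def] using Gm[OF t0'] Gbm by measurable
  have sub0: "UNIV \<times> {t0..2*t0} \<subseteq> UNIV \<times> {0..}" "UNIV \<times> {t0..2*t0} \<subseteq> UNIV \<times> {0<..}" using t0 by auto
  have Gc1: "continuous_on (UNIV \<times> {t0..2*t0}) (\<lambda>(b, s). G b s)" by (rule continuous_on_subset[OF Gc sub0(1)])
  have Gbc1: "continuous_on (UNIV \<times> {t0..2*t0}) (\<lambda>(b, s). Gb b s)" by (rule continuous_on_subset[OF Gbc sub0(2)])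
  have Gtc1: "continuous_on (UNIV \<times> {t0..2*t0}) (\<lambda>(b, s). Gt b s)" by (rule continuous_on_subset[OF Gtc sub0(2)])
  have Dc1: "continuous_on (UNIV \<times> {t0..2*t0}) (\<lambda>(b, s). D b s)" by (rule continuous_on_subset[OF Dc sub0(1)])
  have Ym: "\<And>s. 0 \<le> s \<Longrightarrow> (\<lambda>\<omega>. G (B s \<omega>) s) \<in> borel_measurable M"
    by (rule measurable_compose[OF Bmeas Gm])
  have Jm: "\<And>t. 0 \<le> t \<Longrightarrow> J t \<in> borel_measurable M" using J unfolding is_ito_integral_def by auto
  obtain Nul where Nul: "Nul \<in> null_sets M"
    "\<And>\<omega>. \<omega> \<in> space M \<Longrightarrow> \<omega> \<notin> Nul \<Longrightarrow> (B 0 \<omega> = 0 \<and> continuous_on {0..} (\<lambda>t. B t \<omega>)) \<and>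
       (\<forall>t\<ge>0. G (B t \<omega>) t = G (B 0 \<omega>) 0 + integral {0..t} (\<lambda>s. D (B s \<omega>) s) + \<sigma> * J t \<omega>)"
  proof -
    have "AE \<omega> in M. (B 0 \<omega> = 0 \<and> continuous_on {0..} (\<lambda>t. B t \<omega>)) \<and>
       (\<forall>t\<ge>0. G (B t \<omega>) t = G (B 0 \<omega>) 0 + integral {0..t} (\<lambda>s. D (B s \<omega>) s) + \<sigma> * J t \<omega>)"
      using AE0 eq by (rule AE_conjI)
    then obtain Nul where "{\<omega>\<in>space M. \<not> ((B 0 \<omega> = 0 \<and> continuous_on {0..} (\<lambda>t. B t \<omega>)) \<and>
       (\<forall>t\<ge>0. G (B t \<omega>) t = G (B 0 \<omega>) 0 + integral {0..t} (\<lambda>s. D (B s \<omega>) s) + \<sigma> * J t \<omega>))} \<subseteq> Nul"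
      "emeasure M Nul = 0" "Nul \<in> sets M"
      by (rule AE_E)
    note h = this
    show ?thesis
    proof (rule that[of Nul])
      show "Nul \<in> null_sets M" using h(2,3) by (simp add: null_sets_def)
      fix \<omega> assume "\<omega> \<in> space M" "\<omega> \<notin> Nul"
      then show "(B 0 \<omega> = 0 \<and> continuous_on {0..} (\<lambda>t. B t \<omega>)) \<and>
       (\<forall>t\<ge>0. G (B t \<omega>) t = G (B 0 \<omega>) 0 + integral {0..t} (\<lambda>s. D (B s \<omega>) s) + \<sigma> * J t \<omega>)"
        using h(1) by blast
    qed
  qed

  have key: "prob {\<omega> \<in> space M. \<delta>' < \<bar>A \<omega>\<bar>} \<le> \<eta>" if dp: "0 < \<delta>'" and eta: "0 < \<eta>" for \<delta>' \<eta>
  proof -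
    define \<kappa> where "\<kappa> = \<eta> / 8"
    define \<epsilon> where "\<epsilon> = \<delta>' * \<kappa> / 4"
    have ka: "0 < \<kappa>" and ep: "0 < \<epsilon>" using dp eta by (auto simp: \<kappa>_def \<epsilon>_def)
    obtain K :: nat where K: "prob (Ebig t0 (real K)) < \<eta> / 8"
      using order_tendstoD(2)[OF Ebig_lim[OF t0], of "\<eta> / 8"] eta unfolding eventually_sequentially by auto
    obtain CD where CD: "\<And>x s. \<bar>x\<bar> \<le> real K \<Longrightarrow> s \<in> {t0..2*t0} \<Longrightarrow> \<bar>D x s\<bar> \<le> CD"
      using compact_bound2[OF Dc1, of "real K"] by blast
    obtain CG where CG: "\<And>x s. \<bar>x\<bar> \<le> real K \<Longrightarrow> s \<in> {t0..2*t0} \<Longrightarrow> \<bar>Gt x s\<bar> \<le> CG"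
      using compact_bound2[OF Gtc1, of "real K"] by blast
    define CD' where "CD' = max CD 1"
    define CG' where "CG' = max CG 1"
    have CD': "0 < CD'" "\<And>x s. \<bar>x\<bar> \<le> real K \<Longrightarrow> s \<in> {t0..2*t0} \<Longrightarrow> \<bar>D x s\<bar> \<le> CD'"
      using CD by (auto simp: CD'_def intro: order.trans[OF _ max.cobounded1])
    have CG': "0 < CG'" "\<And>x s. \<bar>x\<bar> \<le> real K \<Longrightarrow> s \<in> {t0..2*t0} \<Longrightarrow> \<bar>Gt x s\<bar> \<le> CG'"
      using CG by (auto simp: CG'_def intro: order.trans[OF _ max.cobounded1])
    define L where "L = sqrt (8 / \<eta>)"
    have L: "0 < L" "L^2 = 8 / \<eta>" using eta by (auto simp: L_def)
    define \<zeta> where "\<zeta> = \<epsilon> / (2 * L)"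
    have ze: "0 < \<zeta>" using ep L by (simp add: \<zeta>_def)
    obtain d1 where d1: "0 < d1" "\<And>x x' s s'. \<bar>x\<bar> \<le> real K \<Longrightarrow> \<bar>x'\<bar> \<le> real K \<Longrightarrow> s \<in> {t0..2*t0} \<Longrightarrow> s' \<in> {t0..2*t0} \<Longrightarrow>
            \<bar>x - x'\<bar> < d1 \<Longrightarrow> \<bar>s - s'\<bar> < d1 \<Longrightarrow> \<bar>Gb x s - Gb x' s'\<bar> < \<zeta>"
      using compact_ucont2[OF Gbc1 ze, of "real K"] by blast
    define \<xi> where "\<xi> = \<epsilon> * sqrt (\<eta> / 8) / \<bar>\<sigma>\<bar>"
    have xi: "0 < \<xi>" using ep eta sig by (simp add: \<xi>_def)
    obtain d2 where d2: "0 < d2" "\<And>x x' s s'. \<bar>x\<bar> \<le> real K \<Longrightarrow> \<bar>x'\<bar> \<le> real K \<Longrightarrow> s \<in> {t0..2*t0} \<Longrightarrow> s' \<in> {t0..2*t0} \<Longrightarrow>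
            \<bar>x - x'\<bar> < d2 \<Longrightarrow> \<bar>s - s'\<bar> < d2 \<Longrightarrow> \<bar>G x s - G x' s'\<bar> < \<xi>"
      using compact_ucont2[OF Gc1 xi, of "real K"] by blast
    define \<tau>0 where "\<tau>0 = min t0 (min (d2 / 2) (min ((\<epsilon> / CD')^2) (min ((\<epsilon> / (2 * CG'))^2) (\<eta> / 8 * d1^2))))"
    have tau0: "0 < \<tau>0" using t0 d2 ep CD' CG' eta d1 by (simp add: \<tau>0_def)
    obtain m0 where m0: "\<And>m. m \<ge> m0 \<Longrightarrow> prob (Osc t0 m (d2 / 2)) < \<eta> / 8"
      using order_tendstoD(2)[OF Osc_lim[OF t0, of "d2 / 2"], of "\<eta> / 8"] eta d2 unfolding eventually_sequentially by auto
    obtain m1 :: nat where m1: "t0 / \<tau>0 < real m1" using reals_Archimedean2 by blast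
    define m' where "m' = max m0 m1"
    define m where "m = Suc m'"
    define \<tau> where "\<tau> = t0 / real m"
    have mpos: "0 < m" by (simp add: m_def)
    have tau: "0 < \<tau>" "\<tau> \<le> \<tau>0"
    proof -
      show "0 < \<tau>" using t0 by (simp add: \<tau>_def m_def)
      have "t0 / \<tau>0 < real m" using m1 by (simp add: m_def m'_def)
      then have "t0 < \<tau>0 * real m" using tau0 by (simp add: field_simps)
      then show "\<tau> \<le> \<tau>0" using mpos by (simp add: \<tau>_def field_simps)
    qed
    have tau_le: "\<tau> \<le> t0" "\<tau> \<le> d2 / 2" "\<tau> \<le> (\<epsilon> / CD')^2" "\<tau> \<le> (\<epsilon> / (2 * CG'))^2" "\<tau> \<le> \<eta> / 8 * d1^2"
      using tau(2) unfolding \<tau>0_def by auto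
    have sq1: "sqrt \<tau> \<le> \<epsilon> / CD'" using real_sqrt_le_mono[OF tau_le(3)] ep CD' by simp
    have sq2: "sqrt \<tau> \<le> \<epsilon> / (2 * CG')" using real_sqrt_le_mono[OF tau_le(4)] ep CG' by simp
    have Osc_small: "prob (Osc t0 m' (d2 / 2)) < \<eta> / 8" using m0 by (simp add: m'_def)
    define t1 where "t1 = t0 + \<tau>"
    have t1: "t0 < t1" "t1 \<le> 2 * t0" "0 \<le> t1" using tau tau_le t0 by (auto simp: t1_def)
    have Bt1m[measurable]: "B t1 \<in> borel_measurable M" using t1(3) by (rule Bmeas)
    define c where "c = \<epsilon> * sqrt \<tau> / \<bar>\<sigma>\<bar>"
    have c: "0 < c" using ep tau sig by (simp add: c_def)
    obtain n where npos: "0 < n" and Rn: "prob {\<omega> \<in> space M. c < \<bar>J (t0 + t0 / real m) \<omega> - J t0 \<omega> -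
      (\<Sum>k\<in>{m * n..<(m + 1) * n}. G (B (real k * (t0 / real (m * n))) \<omega>) (real k * (t0 / real (m * n))) *
          (B (real (Suc k) * (t0 / real (m * n))) \<omega> - B (real k * (t0 / real (m * n))) \<omega>))\<bar>} < \<eta> / 8"
      using Rconv[OF J Ym t0 mpos c, of "\<eta> / 8"] eta by auto
    define \<delta> where "\<delta> = t0 / real (m * n)"
    have dpos: "0 < \<delta>" using t0 mpos npos by (simp add: \<delta>_def)
    have dt0: "real (m * n) * \<delta> = t0" using mpos npos by (simp add: \<delta>_def)
    have dn: "real n * \<delta> = \<tau>" using mpos npos by (simp add: \<delta>_def \<tau>_def field_simps)
    have dt1: "real ((m + 1) * n) * \<delta> = t1"
    proof -
      have "real ((m + 1) * n) * \<delta> = real (m * n) * \<delta> + real n * \<delta>" by (simp add: algebra_simps)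
      then show ?thesis using dt0 dn by (simp add: t1_def)
    qed
    have tt: "t0 + t0 / real m = t1" by (simp add: t1_def \<tau>_def)
    define S where "S \<omega> = (\<Sum>k\<in>{m * n..<(m + 1) * n}. G (B (real k * \<delta>) \<omega>) (real k * \<delta>) *
          (B (real (Suc k) * \<delta>) \<omega> - B (real k * \<delta>) \<omega>))" for \<omega>
    have Sm[measurable]: "S \<in> borel_measurable M"
    proof -
      have "0 \<le> real k * \<delta>" "0 \<le> real (Suc k) * \<delta>" for k using dpos by auto
      then show ?thesis unfolding S_def[abs_def]
        by (intro borel_measurable_sum borel_measurable_times borel_measurable_diff Ym Bmeas) auto
    qed
    have Jt0m[measurable]: "J t0 \<in> borel_measurable M" using Jm t0' by auto
    have Jt1m[measurable]: "J t1 \<in> borel_measurable M" using Jm t1(3) by auto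
    have R8: "prob {\<omega> \<in> space M. c < \<bar>J t1 \<omega> - J t0 \<omega> - S \<omega>\<bar>} < \<eta> / 8"
      using Rn unfolding tt \<delta>_def[symmetric] S_def .
    define dj where "dj j \<omega> = G (psum \<delta> j \<omega>) (real j * \<delta>) - G (psum \<delta> (m * n) \<omega>) (real (m * n) * \<delta>)" for j \<omega>
    define Et where "Et \<omega> = (\<Sum>j\<in>{m * n..<(m + 1) * n}. (dj j \<omega> * (\<Prod>i\<in>{m * n..j}. indicator {-\<xi>..\<xi>} (dj i \<omega>))) * inc \<delta> j \<omega>)" for \<omega>
    have TP: "Et \<in> borel_measurable M" "prob {\<omega> \<in> space M. c \<le> \<bar>Et \<omega>\<bar>} \<le> \<xi>^2 * \<delta> * real ((m + 1) * n - m * n) / c^2"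
      using trunc_prob[where \<xi>=\<xi> and ?k0.0="m * n" and ?k1.0="(m + 1) * n", OF Gm dpos c less_imp_le[OF xi]] unfolding Et_def[abs_def] dj_def[abs_def] by auto
    have Etm[measurable]: "Et \<in> borel_measurable M" by (rule TP(1))
    have P3: "prob {\<omega> \<in> space M. c \<le> \<bar>Et \<omega>\<bar>} \<le> \<eta> / 8"
    proof -
      have "real ((m + 1) * n - m * n) = real n" by (simp add: algebra_simps)
      then have "\<xi>^2 * \<delta> * real ((m + 1) * n - m * n) / c^2 = \<xi>^2 * \<tau> / c^2" using dn by (simp add: ac_simps)
      also have "\<dots> = \<eta> / 8"
      proof -
        have x2: "\<xi>^2 = \<eta> * \<epsilon>^2 / (8 * \<sigma>^2)" using eta by (simp add: \<xi>_def power_divide power_mult_distrib)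
        have c2: "c^2 = \<tau> * \<epsilon>^2 / \<sigma>^2" using tau by (simp add: c_def power_divide power_mult_distrib)
        show ?thesis unfolding x2 c2 using ep tau sig by (simp add: field_simps)
      qed
      finally have "\<xi>^2 * \<delta> * real ((m + 1) * n - m * n) / c^2 = \<eta> / 8" .
      with TP(2) show ?thesis by linarith
    qed
    have P1: "prob {\<omega> \<in> space M. \<bar>B t1 \<omega> - B t0 \<omega>\<bar> \<le> \<kappa> * sqrt \<tau>} \<le> \<kappa>"
    proof -
      have "prob {\<omega> \<in> space M. \<bar>B t1 \<omega> - B t0 \<omega>\<bar> \<le> \<kappa> * sqrt \<tau>} \<le> \<kappa> * sqrt \<tau> / sqrt (t1 - t0)"
        using small_ball[OF t0' t1(1), of "\<kappa> * sqrt \<tau>"] ka tau by auto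
      also have "\<dots> = \<kappa>" using tau by (simp add: t1_def)
      finally show ?thesis .
    qed
    have P4: "prob {\<omega> \<in> space M. \<bar>B t1 \<omega> - B t0 \<omega>\<bar> \<ge> L * sqrt \<tau>} \<le> \<eta> / 8"
    proof -
      have "prob {\<omega> \<in> space M. \<bar>B t1 \<omega> - B t0 \<omega>\<bar> \<ge> L * sqrt \<tau>} \<le> (t1 - t0) / (L * sqrt \<tau>)^2"
        using tail_bound[OF t0' t1(1), of "L * sqrt \<tau>"] L tau by auto
      also have "\<dots> = \<eta> / 8" using tau L eta by (simp add: t1_def power_mult_distrib)
      finally show ?thesis .
    qed
    have P5: "prob {\<omega> \<in> space M. \<bar>B t1 \<omega> - B t0 \<omega>\<bar> \<ge> d1} \<le> \<eta> / 8"
    proof -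
      have "prob {\<omega> \<in> space M. \<bar>B t1 \<omega> - B t0 \<omega>\<bar> \<ge> d1} \<le> (t1 - t0) / d1^2"
        using tail_bound[OF t0' t1(1) d1(1)] by auto
      also have "\<dots> \<le> \<eta> / 8" using tau_le(5) d1(1) by (simp add: t1_def field_simps)
      finally show ?thesis .
    qed
    define X1 where "X1 = {\<omega> \<in> space M. \<bar>B t1 \<omega> - B t0 \<omega>\<bar> \<le> \<kappa> * sqrt \<tau>}"
    define X2 where "X2 = {\<omega> \<in> space M. c < \<bar>J t1 \<omega> - J t0 \<omega> - S \<omega>\<bar>}"
    define X3 where "X3 = {\<omega> \<in> space M. c \<le> \<bar>Et \<omega>\<bar>}"
    define X4 where "X4 = {\<omega> \<in> space M. \<bar>B t1 \<omega> - B t0 \<omega>\<bar> \<ge> L * sqrt \<tau>}"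
    define X5 where "X5 = {\<omega> \<in> space M. \<bar>B t1 \<omega> - B t0 \<omega>\<bar> \<ge> d1}"
    define X6 where "X6 = Ebig t0 (real K)"
    define X7 where "X7 = Osc t0 m' (d2 / 2)"
    have Xs: "X1 \<in> events" "X2 \<in> events" "X3 \<in> events" "X4 \<in> events" "X5 \<in> events" "X6 \<in> events" "X7 \<in> events"
      unfolding X1_def X2_def X3_def X4_def X5_def X6_def X7_def
      using Ebig_sets[OF t0] Osc_sets[OF t0] by measurable
    have Nul_s: "Nul \<in> events" using Nul(1) by auto
    have sqt: "0 < sqrt \<tau>" "sqrt \<tau> * sqrt \<tau> = \<tau>" using tau by auto
    have incl: "{\<omega> \<in> space M. \<delta>' < \<bar>A \<omega>\<bar>} \<subseteq> X1 \<union> X2 \<union> X3 \<union> X4 \<union> X5 \<union> X6 \<union> X7 \<union> Nul"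
    proof
      fix \<omega> assume w: "\<omega> \<in> {\<omega> \<in> space M. \<delta>' < \<bar>A \<omega>\<bar>}"
      show "\<omega> \<in> X1 \<union> X2 \<union> X3 \<union> X4 \<union> X5 \<union> X6 \<union> X7 \<union> Nul"
      proof (rule ccontr)
        assume nw: "\<omega> \<notin> X1 \<union> X2 \<union> X3 \<union> X4 \<union> X5 \<union> X6 \<union> X7 \<union> Nul"
        have sp: "\<omega> \<in> space M" and Aw: "\<delta>' < \<bar>A \<omega>\<bar>" using w by auto
        have nX: "\<omega> \<notin> X1" "\<omega> \<notin> X2" "\<omega> \<notin> X3" "\<omega> \<notin> X4" "\<omega> \<notin> X5" "\<omega> \<notin> X6" "\<omega> \<notin> X7" "\<omega> \<notin> Nul"
          using nw by auto
        have B0: "B 0 \<omega> = 0" and cont: "continuous_on {0..} (\<lambda>t. B t \<omega>)"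
          and EQ: "\<And>t. 0 \<le> t \<Longrightarrow> G (B t \<omega>) t = G (B 0 \<omega>) 0 + integral {0..t} (\<lambda>s. D (B s \<omega>) s) + \<sigma> * J t \<omega>"
          using Nul(2)[OF sp nX(8)] by auto
        define \<Delta> where "\<Delta> = B t1 \<omega> - B t0 \<omega>"
        have h1: "\<kappa> * sqrt \<tau> < \<bar>\<Delta>\<bar>" using nX(1) sp by (auto simp: X1_def \<Delta>_def)
        have h4: "\<bar>\<Delta>\<bar> < L * sqrt \<tau>" using nX(4) sp by (auto simp: X4_def \<Delta>_def)
        have h5: "\<bar>\<Delta>\<bar> < d1" using nX(5) sp by (auto simp: X5_def \<Delta>_def)
        have h2: "\<bar>J t1 \<omega> - J t0 \<omega> - S \<omega>\<bar> \<le> c" using nX(2) sp by (auto simp: X2_def)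
        have h3: "\<bar>Et \<omega>\<bar> < c" using nX(3) sp by (auto simp: X3_def)
        have hK: "\<bar>B s \<omega>\<bar> \<le> real K" if "t0 \<le> s" "s \<le> 2 * t0" for s
          by (rule Ebig_good[OF t0 sp _ cont that]) (use nX(6) in \<open>simp add: X6_def\<close>)
        have grid_in: "t0 \<le> real k * \<delta> \<and> real k * \<delta> \<le> t1" if "m * n \<le> k" "k \<le> (m + 1) * n" for k
        proof -
          have k1: "real (m * n) \<le> real k" using that(1) by (simp only: of_nat_le_iff)
          have k2: "real k \<le> real ((m + 1) * n)" using that(2) by (simp only: of_nat_le_iff)
          have "real (m * n) * \<delta> \<le> real k * \<delta>" "real k * \<delta> \<le> real ((m + 1) * n) * \<delta>"
            using mult_right_mono[OF k1, of \<delta>] mult_right_mono[OF k2, of \<delta>] dpos by auto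
          then show ?thesis using dt0 dt1 by simp
        qed
        have hO: "\<bar>B (real k * \<delta>) \<omega> - B t0 \<omega>\<bar> \<le> d2 / 2" if "m * n \<le> k" "k \<le> (m + 1) * n" for k
        proof -
          define r where "r = real k / real (m * n)"
          have mn: "0 < real (m * n)" using mpos npos by simp
          have r: "r \<in> \<rat>" unfolding r_def by (intro Rats_divide Rats_of_nat)
          have k1: "real (m * n) \<le> real k" using that(1) by (simp only: of_nat_le_iff)
          have r1: "1 \<le> r" using k1 mn by (simp add: r_def)
          have k2: "real k \<le> real ((m + 1) * n)" using that(2) by (simp only: of_nat_le_iff)
          have "r \<le> real ((m + 1) * n) / real (m * n)" using k2 mn unfolding r_def by (intro divide_right_mono) auto
          also have "\<dots> = 1 + 1 / (real m' + 1)"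
          proof -
            have rn: "real n \<noteq> 0" "real m \<noteq> 0" using mpos npos by auto
            have "real ((m + 1) * n) / real (m * n) = ((real m + 1) * real n) / (real m * real n)" by (simp add: algebra_simps)
            also have "\<dots> = (real m + 1) / real m" using rn by simp
            also have "\<dots> = 1 + 1 / real m" using rn by (simp add: add_divide_distrib)
            finally show ?thesis by (simp add: m_def)
          qed
          finally have r2: "r \<le> 1 + 1 / (real m' + 1)" .
          have tr: "t0 * r = real k * \<delta>" using mn by (simp add: r_def \<delta>_def)
          have "\<bar>B (t0 * r) \<omega> - B t0 \<omega>\<bar> \<le> d2 / 2"
            by (rule Osc_good[OF sp _ r r1 r2]) (use nX(7) in \<open>simp add: X7_def\<close>)
          then show ?thesis unfolding tr .
        qed
        have hG: "\<bar>G (B (real k * \<delta>) \<omega>) (real k * \<delta>) - G (B t0 \<omega>) t0\<bar> < \<xi>" if "m * n \<le> k" "k \<le> (m + 1) * n" for k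
        proof (rule d2(2))
          have gi: "t0 \<le> real k * \<delta>" "real k * \<delta> \<le> t1" using grid_in[OF that] by auto
          show "\<bar>B (real k * \<delta>) \<omega>\<bar> \<le> real K" using hK gi t1 by auto
          show "\<bar>B t0 \<omega>\<bar> \<le> real K" using hK t0 by auto
          show "real k * \<delta> \<in> {t0..2 * t0}" using gi t1 by auto
          show "t0 \<in> {t0..2 * t0}" using t0 by auto
          show "\<bar>B (real k * \<delta>) \<omega> - B t0 \<omega>\<bar> < d2" using hO[OF that] d2(1) by simp
          show "\<bar>real k * \<delta> - t0\<bar> < d2" using gi tau_le(2) d2(1) by (simp add: t1_def)
        qed
        have ps: "psum \<delta> k \<omega> = B (real k * \<delta>) \<omega>" for k using psum_eq B0 by simp
        define G0 where "G0 = G (B t0 \<omega>) t0"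
        have djw: "dj k \<omega> = G (B (real k * \<delta>) \<omega>) (real k * \<delta>) - G0" for k
          unfolding dj_def ps dt0 G0_def ..
        have sum_inc: "(\<Sum>j\<in>{m * n..<(m + 1) * n}. inc \<delta> j \<omega>) = \<Delta>"
          unfolding inc_def \<Delta>_def using telescope_grid[of "m * n" "(m + 1) * n" "\<lambda>t. B t \<omega>" \<delta>] dt0 dt1 by simp
        have Et_eq: "Et \<omega> = S \<omega> - G0 * \<Delta>"
        proof -
          have "Et \<omega> = (\<Sum>j\<in>{m * n..<(m + 1) * n}. (G (B (real j * \<delta>) \<omega>) (real j * \<delta>) - G0) * inc \<delta> j \<omega>)"
            unfolding Et_def
          proof (rule sum.cong[OF refl])
            fix j assume j: "j \<in> {m * n..<(m + 1) * n}"
            have "(\<Prod>i\<in>{m * n..j}. indicator {-\<xi>..\<xi>} (dj i \<omega>) :: real) = 1"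
            proof (rule prod.neutral, rule ballI)
              fix i assume "i \<in> {m * n..j}"
              then have "\<bar>dj i \<omega>\<bar> < \<xi>" unfolding djw G0_def using hG[of i] j by auto
              then show "indicator {-\<xi>..\<xi>} (dj i \<omega>) = (1::real)" by (auto simp: indicator_def)
            qed
            then show "dj j \<omega> * (\<Prod>i\<in>{m * n..j}. indicator {-\<xi>..\<xi>} (dj i \<omega>)) * inc \<delta> j \<omega> =
                (G (B (real j * \<delta>) \<omega>) (real j * \<delta>) - G0) * inc \<delta> j \<omega>"
              by (simp add: djw)
          qed
          also have "\<dots> = (\<Sum>j\<in>{m * n..<(m + 1) * n}. G (B (real j * \<delta>) \<omega>) (real j * \<delta>) * inc \<delta> j \<omega>)
               - (\<Sum>j\<in>{m * n..<(m + 1) * n}. G0 * inc \<delta> j \<omega>)"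
            by (simp add: left_diff_distrib sum_subtractf)
          also have "(\<Sum>j\<in>{m * n..<(m + 1) * n}. G (B (real j * \<delta>) \<omega>) (real j * \<delta>) * inc \<delta> j \<omega>) = S \<omega>"
            unfolding S_def inc_def ..
          also have "(\<Sum>j\<in>{m * n..<(m + 1) * n}. G0 * inc \<delta> j \<omega>) = G0 * (\<Sum>j\<in>{m * n..<(m + 1) * n}. inc \<delta> j \<omega>)"
            by (simp add: sum_distrib_left)
          finally show ?thesis using sum_inc by simp
        qed
        define f where "f s = D (B s \<omega>) s" for s
        have fc: "continuous_on {0..} f" unfolding f_def[abs_def] by (rule path_cont[OF Dc cont])
        define I where "I = integral {0..t1} f - integral {0..t0} f"
        have Ib: "\<bar>I\<bar> \<le> CD' * \<tau>"
        proof -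
          have "\<bar>integral {0..t1} f - integral {0..t0} f - (t1 - t0) * 0\<bar> \<le> CD' * (t1 - t0)"
          proof (rule integral_diff_bound[OF fc t0' less_imp_le[OF t1(1)]])
            fix s assume "t0 \<le> s" "s \<le> t1"
            then show "\<bar>f s - 0\<bar> \<le> CD'" unfolding f_def using CD'(2) hK t1 by auto
          qed
          then show ?thesis by (simp add: I_def t1_def)
        qed
        have EQd: "G (B t1 \<omega>) t1 - G (B t0 \<omega>) t0 = I + \<sigma> * (J t1 \<omega> - J t0 \<omega>)"
          using EQ[OF t1(3)] EQ[OF t0'] unfolding I_def f_def by (simp add: algebra_simps)
        have T1a: "\<bar>G (B t1 \<omega>) t1 - G (B t1 \<omega>) t0\<bar> \<le> CG' * \<tau>"
        proof -
          have der: "((\<lambda>s. G (B t1 \<omega>) s) has_real_derivative Gt (B t1 \<omega>) x) (at x)"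
            if "min t0 t1 \<le> x" "x \<le> max t0 t1" for x
            by (rule Gt) (use that t0 t1 in auto)
          obtain z where z: "min t0 t1 \<le> z" "z \<le> max t0 t1"
            "G (B t1 \<omega>) t1 - G (B t1 \<omega>) t0 = (t1 - t0) * Gt (B t1 \<omega>) z"
            using mvt_between[OF der] by blast
          have "\<bar>Gt (B t1 \<omega>) z\<bar> \<le> CG'" using CG'(2) hK[of t1] z t1 by auto
          then show ?thesis using z t1 by (simp add: abs_mult t1_def mult.commute mult_left_mono tau(1) less_imp_le)
        qed
        have T1b: "\<bar>G (B t1 \<omega>) t0 - G (B t0 \<omega>) t0 - Gb (B t0 \<omega>) t0 * \<Delta>\<bar> \<le> \<zeta> * \<bar>\<Delta>\<bar>"
        proof -
          have der: "((\<lambda>b. G b t0) has_real_derivative Gb x t0) (at x)" for x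
            by (rule Gb[OF t0])
          obtain z where z: "min (B t0 \<omega>) (B t1 \<omega>) \<le> z" "z \<le> max (B t0 \<omega>) (B t1 \<omega>)"
            "G (B t1 \<omega>) t0 - G (B t0 \<omega>) t0 = (B t1 \<omega> - B t0 \<omega>) * Gb z t0"
            using mvt_between[of "B t0 \<omega>" "B t1 \<omega>" "\<lambda>b. G b t0" "\<lambda>b. Gb b t0", OF der] by blast
          have bK: "\<bar>B t0 \<omega>\<bar> \<le> real K" "\<bar>B t1 \<omega>\<bar> \<le> real K" using hK t0 t1 by auto
          have "\<bar>Gb z t0 - Gb (B t0 \<omega>) t0\<bar> < \<zeta>"
          proof (rule d1(2))
            show "\<bar>z\<bar> \<le> real K" using z bK by (auto simp: abs_le_iff)
            show "\<bar>B t0 \<omega>\<bar> \<le> real K" by (rule bK(1))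
            show "t0 \<in> {t0..2 * t0}" using t0 by simp
            then show "t0 \<in> {t0..2 * t0}" .
            have "\<bar>z - B t0 \<omega>\<bar> \<le> \<bar>\<Delta>\<bar>" using z unfolding \<Delta>_def by (auto simp: abs_le_iff)
            then show "\<bar>z - B t0 \<omega>\<bar> < d1" using h5 by simp
            show "\<bar>t0 - t0\<bar> < d1" using d1(1) by simp
          qed
          moreover have "G (B t1 \<omega>) t0 - G (B t0 \<omega>) t0 - Gb (B t0 \<omega>) t0 * \<Delta> = \<Delta> * (Gb z t0 - Gb (B t0 \<omega>) t0)"
            using z(3) unfolding \<Delta>_def by (simp add: algebra_simps)
          ultimately show ?thesis
            using mult_left_mono[of "\<bar>Gb z t0 - Gb (B t0 \<omega>) t0\<bar>" \<zeta> "\<bar>\<Delta>\<bar>"] by (simp add: abs_mult mult.commute)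
        qed
        define T where "T = G (B t1 \<omega>) t1 - G (B t0 \<omega>) t0 - Gb (B t0 \<omega>) t0 * \<Delta>"
        have Tb: "\<bar>T\<bar> \<le> CG' * \<tau> + \<zeta> * \<bar>\<Delta>\<bar>" using T1a T1b unfolding T_def by linarith
        have Aeq: "A \<omega> * \<Delta> = I - T + \<sigma> * (J t1 \<omega> - J t0 \<omega> - S \<omega>) + \<sigma> * Et \<omega>"
          using EQd unfolding A_def T_def Et_eq G0_def by (simp add: algebra_simps)
        have b1: "CD' * \<tau> \<le> \<epsilon> * sqrt \<tau>"
        proof -
          have "CD' * sqrt \<tau> \<le> \<epsilon>" using sq1 CD'(1) by (simp add: field_simps)
          then have "CD' * sqrt \<tau> * sqrt \<tau> \<le> \<epsilon> * sqrt \<tau>" using sqt by (intro mult_right_mono) auto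
          then show ?thesis using sqt by (simp add: mult.assoc)
        qed
        have b2: "CG' * \<tau> \<le> \<epsilon> * sqrt \<tau> / 2"
        proof -
          have "CG' * sqrt \<tau> \<le> \<epsilon> / 2" using sq2 CG'(1) by (simp add: field_simps)
          then have "CG' * sqrt \<tau> * sqrt \<tau> \<le> \<epsilon> / 2 * sqrt \<tau>" using sqt by (intro mult_right_mono) auto
          then show ?thesis using sqt by (simp add: mult.assoc)
        qed
        have b3: "\<zeta> * \<bar>\<Delta>\<bar> < \<epsilon> * sqrt \<tau> / 2"
        proof -
          have "\<zeta> * \<bar>\<Delta>\<bar> < \<zeta> * (L * sqrt \<tau>)" using h4 ze by simp
          also have "\<dots> = \<epsilon> * sqrt \<tau> / 2" using L(1) by (simp add: \<zeta>_def)
          finally show ?thesis .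
        qed
        have b4: "\<bar>\<sigma> * (J t1 \<omega> - J t0 \<omega> - S \<omega>)\<bar> \<le> \<epsilon> * sqrt \<tau>"
        proof -
          have "\<bar>\<sigma> * (J t1 \<omega> - J t0 \<omega> - S \<omega>)\<bar> \<le> \<bar>\<sigma>\<bar> * c" unfolding abs_mult using h2 by (intro mult_left_mono) auto
          also have "\<dots> = \<epsilon> * sqrt \<tau>" using sig by (simp add: c_def)
          finally show ?thesis .
        qed
        have b5: "\<bar>\<sigma> * Et \<omega>\<bar> < \<epsilon> * sqrt \<tau>"
        proof -
          have "\<bar>\<sigma> * Et \<omega>\<bar> < \<bar>\<sigma>\<bar> * c" unfolding abs_mult using h3 sig by (intro mult_strict_left_mono) auto
          also have "\<dots> = \<epsilon> * sqrt \<tau>" using sig by (simp add: c_def)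
          finally show ?thesis .
        qed
        have tri: "\<bar>a - b + x + y\<bar> \<le> \<bar>a\<bar> + \<bar>b\<bar> + \<bar>x\<bar> + \<bar>y\<bar>" for a b x y :: real by arith
        have "\<bar>A \<omega> * \<Delta>\<bar> \<le> \<bar>I\<bar> + \<bar>T\<bar> + \<bar>\<sigma> * (J t1 \<omega> - J t0 \<omega> - S \<omega>)\<bar> + \<bar>\<sigma> * Et \<omega>\<bar>"
          unfolding Aeq by (rule tri)
        then have up: "\<bar>A \<omega> * \<Delta>\<bar> < 4 * (\<epsilon> * sqrt \<tau>)"
          using Ib Tb b1 b2 b3 b4 b5 by linarith
        have "\<delta>' * (\<kappa> * sqrt \<tau>) \<le> \<bar>A \<omega>\<bar> * \<bar>\<Delta>\<bar>"
          using Aw h1 dp ka sqt by (intro mult_mono) auto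
        then have low: "4 * (\<epsilon> * sqrt \<tau>) \<le> \<bar>A \<omega> * \<Delta>\<bar>" by (simp add: \<epsilon>_def abs_mult)
        show False using up low by simp
      qed
    qed
    have "prob {\<omega> \<in> space M. \<delta>' < \<bar>A \<omega>\<bar>} \<le> prob (X1 \<union> X2 \<union> X3 \<union> X4 \<union> X5 \<union> X6 \<union> X7 \<union> Nul)"
      by (rule finite_measure_mono[OF incl]) (use Xs Nul_s in auto)
    also have "\<dots> \<le> prob X1 + prob X2 + prob X3 + prob X4 + prob X5 + prob X6 + prob X7 + prob Nul"
    proof -
      have s1: "X1 \<union> X2 \<in> events" "X1 \<union> X2 \<union> X3 \<in> events" "X1 \<union> X2 \<union> X3 \<union> X4 \<in> events"
        "X1 \<union> X2 \<union> X3 \<union> X4 \<union> X5 \<in> events" "X1 \<union> X2 \<union> X3 \<union> X4 \<union> X5 \<union> X6 \<in> events"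
        "X1 \<union> X2 \<union> X3 \<union> X4 \<union> X5 \<union> X6 \<union> X7 \<in> events" using Xs by auto
      have "prob (X1 \<union> X2 \<union> X3 \<union> X4 \<union> X5 \<union> X6 \<union> X7 \<union> Nul) \<le> prob (X1 \<union> X2 \<union> X3 \<union> X4 \<union> X5 \<union> X6 \<union> X7) + prob Nul"
        by (rule prob_Un_le[OF s1(6) Nul_s])
      moreover have "prob (X1 \<union> X2 \<union> X3 \<union> X4 \<union> X5 \<union> X6 \<union> X7) \<le> prob (X1 \<union> X2 \<union> X3 \<union> X4 \<union> X5 \<union> X6) + prob X7"
        by (rule prob_Un_le[OF s1(5) Xs(7)])
      moreover have "prob (X1 \<union> X2 \<union> X3 \<union> X4 \<union> X5 \<union> X6) \<le> prob (X1 \<union> X2 \<union> X3 \<union> X4 \<union> X5) + prob X6"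
        by (rule prob_Un_le[OF s1(4) Xs(6)])
      moreover have "prob (X1 \<union> X2 \<union> X3 \<union> X4 \<union> X5) \<le> prob (X1 \<union> X2 \<union> X3 \<union> X4) + prob X5"
        by (rule prob_Un_le[OF s1(3) Xs(5)])
      moreover have "prob (X1 \<union> X2 \<union> X3 \<union> X4) \<le> prob (X1 \<union> X2 \<union> X3) + prob X4"
        by (rule prob_Un_le[OF s1(2) Xs(4)])
      moreover have "prob (X1 \<union> X2 \<union> X3) \<le> prob (X1 \<union> X2) + prob X3"
        by (rule prob_Un_le[OF s1(1) Xs(3)])
      moreover have "prob (X1 \<union> X2) \<le> prob X1 + prob X2"
        by (rule prob_Un_le[OF Xs(1) Xs(2)])
      ultimately show ?thesis by linarith
    qed
    also have "\<dots> \<le> \<eta> / 8 + \<eta> / 8 + \<eta> / 8 + \<eta> / 8 + \<eta> / 8 + \<eta> / 8 + \<eta> / 8 + 0"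
    proof -
      have "prob Nul = 0" using Nul(1) by (simp add: measure_eq_0_null_sets)
      moreover have "prob X1 \<le> \<eta> / 8" using P1 by (simp add: X1_def \<kappa>_def)
      moreover have "prob X2 \<le> \<eta> / 8" using R8 by (simp add: X2_def)
      moreover have "prob X3 \<le> \<eta> / 8" using P3 by (simp add: X3_def)
      moreover have "prob X4 \<le> \<eta> / 8" using P4 by (simp add: X4_def)
      moreover have "prob X5 \<le> \<eta> / 8" using P5 by (simp add: X5_def)
      moreover have "prob X6 \<le> \<eta> / 8" using K by (simp add: X6_def)
      moreover have "prob X7 \<le> \<eta> / 8" using Osc_small by (simp add: X7_def)
      ultimately show ?thesis by linarith
    qed
    also have "\<dots> \<le> \<eta>" using eta by simp
    finally show ?thesis .
  qed
  have nullA: "{\<omega> \<in> space M. A \<omega> \<noteq> 0} \<in> null_sets M"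
  proof -
    have z: "{\<omega> \<in> space M. inverse (real (Suc n)) < \<bar>A \<omega>\<bar>} \<in> null_sets M" for n
    proof -
      have ev: "{\<omega> \<in> space M. inverse (real (Suc n)) < \<bar>A \<omega>\<bar>} \<in> events" by measurable
      have "prob {\<omega> \<in> space M. inverse (real (Suc n)) < \<bar>A \<omega>\<bar>} \<le> 0"
      proof (rule field_le_epsilon)
        fix e :: real assume "0 < e"
        then show "prob {\<omega> \<in> space M. inverse (real (Suc n)) < \<bar>A \<omega>\<bar>} \<le> 0 + e"
          using key[of "inverse (real (Suc n))" e] by simp
      qed
      then have "prob {\<omega> \<in> space M. inverse (real (Suc n)) < \<bar>A \<omega>\<bar>} = 0"
        using measure_nonneg[of M "{\<omega> \<in> space M. inverse (real (Suc n)) < \<bar>A \<omega>\<bar>}"] by linarith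
      then show ?thesis using ev by (simp add: null_setsI emeasure_eq_measure)
    qed
    have "(\<Union>n. {\<omega> \<in> space M. inverse (real (Suc n)) < \<bar>A \<omega>\<bar>}) \<in> null_sets M"
      using z by (rule null_sets_UN)
    moreover have "{\<omega> \<in> space M. A \<omega> \<noteq> 0} = (\<Union>n. {\<omega> \<in> space M. inverse (real (Suc n)) < \<bar>A \<omega>\<bar>})"
    proof (intro set_eqI iffI)
      fix \<omega> assume "\<omega> \<in> {\<omega> \<in> space M. A \<omega> \<noteq> 0}"
      then obtain n where "inverse (real (Suc n)) < \<bar>A \<omega>\<bar>" "\<omega> \<in> space M"
        using reals_Archimedean[of "\<bar>A \<omega>\<bar>"] by auto
      then show "\<omega> \<in> (\<Union>n. {\<omega> \<in> space M. inverse (real (Suc n)) < \<bar>A \<omega>\<bar>})" by auto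
    next
      fix \<omega> assume "\<omega> \<in> (\<Union>n. {\<omega> \<in> space M. inverse (real (Suc n)) < \<bar>A \<omega>\<bar>})"
      then obtain n where "inverse (real (Suc n)) < \<bar>A \<omega>\<bar>" "\<omega> \<in> space M" by auto
      moreover have "0 \<le> inverse (real (Suc n))" by simp
      ultimately show "\<omega> \<in> {\<omega> \<in> space M. A \<omega> \<noteq> 0}" by auto
    qed
    ultimately show ?thesis by simp
  qed
  have AEA: "AE \<omega> in M. A \<omega> = 0 \<and> B 0 \<omega> = 0"
  proof -
    have "AE \<omega> in M. A \<omega> = 0" by (rule AE_I'[OF nullA]) auto
    moreover have "AE \<omega> in M. B 0 \<omega> = 0" using AE0 by auto
    ultimately show ?thesis by auto
  qed
  define F where "F y = Gb y t0 - \<sigma> * G y t0" for y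
  have Fc: "continuous_on UNIV F"
    unfolding F_def[abs_def]
    using cont_slice[OF Gbc, of t0] cont_slice[OF Gc, of t0] t0 by (auto intro!: continuous_intros)
  show ?thesis
  proof (rule ccontr)
    assume "Gb b t0 \<noteq> \<sigma> * G b t0"
    then have Fb: "0 < \<bar>F b\<bar>" by (simp add: F_def)
    obtain r where r: "0 < r" "\<And>y. dist y b < r \<Longrightarrow> dist (F y) (F b) < \<bar>F b\<bar>"
      using Fc Fb unfolding continuous_on_iff by (metis UNIV_I)
    have Fne: "F y \<noteq> 0" if "b - r < y" "y < b + r" for y
    proof
      assume "F y = 0"
      moreover have "dist y b < r" using that by (simp add: dist_real_def abs_less_iff)
      ultimately show False using r(2)[of y] by (simp add: dist_real_def)
    qed
    define P where "P = {\<omega> \<in> space M. b - r < B t0 \<omega> - B 0 \<omega> \<and> B t0 \<omega> - B 0 \<omega> < b + r}"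
    have pos: "0 < prob P" unfolding P_def using pos_prob[of 0 t0 "b - r" "b + r"] t0 r(1) by simp
    have Pev: "P \<in> events" unfolding P_def by measurable
    have "AE \<omega> in M. \<omega> \<notin> P"
      using AEA
    proof (rule AE_mp, intro AE_I2 impI)
      fix \<omega> assume "\<omega> \<in> space M" "A \<omega> = 0 \<and> B 0 \<omega> = 0"
      then show "\<omega> \<notin> P" using Fne[of "B t0 \<omega>"] unfolding P_def A_def F_def by auto
    qed
    then have "P \<in> null_sets M" using AE_iff_null_sets[OF Pev] by simp
    then have "prob P = 0" by (simp add: measure_eq_0_null_sets)
    then show False using pos by simp
  qed
qed

end


lemma rat_dense_bound':
  fixes f :: "real \<Rightarrow> real"
  assumes cont: "continuous_on {0..} f" and t0: "0 < t0" and R: "1 \<le> R"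
    and H: "\<And>r. r \<in> \<rat> \<Longrightarrow> 1 \<le> r \<Longrightarrow> r \<le> R \<Longrightarrow> \<bar>f (t0 * r)\<bar> \<le> K"
    and s: "t0 \<le> s" "s \<le> t0 * R"
  shows "\<bar>f s\<bar> \<le> K"
proof (rule ccontr)
  assume "\<not> \<bar>f s\<bar> \<le> K"
  then have e: "0 < \<bar>f s\<bar> - K" by simp
  have "s \<in> {0..}" using s t0 by simp
  then obtain d where d: "0 < d" "\<And>y. y \<in> {0..} \<Longrightarrow> dist y s < d \<Longrightarrow> dist (f y) (f s) < \<bar>f s\<bar> - K"
    using cont e unfolding continuous_on_iff by metis
  obtain r where r: "r \<in> \<rat>" "1 \<le> r" "r \<le> R" "\<bar>t0 * r - s\<bar> < d"
  proof -
    define u where "u = s / t0"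
    have u: "1 \<le> u" "u \<le> R" "t0 * u = s" using s t0 by (auto simp: u_def field_simps)
    obtain r where r: "r \<in> \<rat>" "max 1 (u - d / t0) < r" "r < u"
      if "1 < u"
      using Rats_dense_in_real[of "max 1 (u - d / t0)" u] d t0 by (auto simp: field_simps)
    show ?thesis
    proof (cases "1 < u")
      case True
      note rr = r[OF True]
      have "u - r < d / t0" using rr by auto
      then have "t0 * (u - r) < d" using t0 by (simp add: field_simps)
      moreover have "t0 * r \<le> t0 * u" using rr t0 by (intro mult_left_mono) auto
      ultimately have "\<bar>t0 * r - s\<bar> < d" using u(3) by (simp add: algebra_simps abs_if)
      then show ?thesis using that rr u by auto
    next
      case False
      then have "u = 1" using u by simp
      then show ?thesis using that[of 1] d u R by auto
    qed
  qed
  have "dist (f (t0 * r)) (f s) < \<bar>f s\<bar> - K"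
    using d(2)[of "t0 * r"] r t0 by (auto simp: dist_real_def)
  moreover have "\<bar>f (t0 * r)\<bar> \<le> K" using H r by auto
  ultimately show False by (simp add: dist_real_def)
qed

context bmx
begin

lemma S2:
  fixes G D :: "real \<Rightarrow> real \<Rightarrow> real" and \<phi> :: "real \<Rightarrow> real" and a q \<sigma> t0 :: real
    and J :: "real \<Rightarrow> 'a \<Rightarrow> real"
  assumes t0: "0 < t0" and sig: "\<sigma> \<noteq> 0"
    and Gc: "continuous_on (UNIV \<times> {0..}) (\<lambda>(b, s). G b s)"
    and Dc: "continuous_on (UNIV \<times> {0..}) (\<lambda>(b, s). D b s)"
    and Gf: "\<And>b s. t0 \<le> s \<Longrightarrow> G b s = \<phi> s * exp (\<sigma> * b)"
    and Df: "\<And>b. D b t0 = a * exp (\<sigma> * b) - q * exp (2 * \<sigma> * b)"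
    and J: "is_ito_integral M B (\<lambda>s \<omega>. G (B s \<omega>) s) J"
    and eq: "AE \<omega> in M. \<forall>t\<ge>0. G (B t \<omega>) t = G (B 0 \<omega>) 0 + integral {0..t} (\<lambda>s. D (B s \<omega>) s) + \<sigma> * J t \<omega>"
  shows "q = 0"
proof (rule ccontr)
  assume q: "q \<noteq> 0"
  have t0': "0 \<le> t0" using t0 by simp
  have Gm: "\<And>s. 0 \<le> s \<Longrightarrow> (\<lambda>b. G b s) \<in> borel_measurable borel" using borel_slice[OF Gc] by auto
  have Bt0m[measurable]: "B t0 \<in> borel_measurable M" using t0' by (rule Bmeas)
  have Ym: "\<And>s. 0 \<le> s \<Longrightarrow> (\<lambda>\<omega>. G (B s \<omega>) s) \<in> borel_measurable M"
    by (rule measurable_compose[OF Bmeas Gm])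
  have Jm: "\<And>t. 0 \<le> t \<Longrightarrow> J t \<in> borel_measurable M" using J unfolding is_ito_integral_def by auto
  have sub0: "UNIV \<times> {t0..2*t0} \<subseteq> UNIV \<times> {0..}" using t0 by auto
  have Dc1: "continuous_on (UNIV \<times> {t0..2*t0}) (\<lambda>(b, s). D b s)" by (rule continuous_on_subset[OF Dc sub0])
  obtain Nul where Nul: "Nul \<in> null_sets M"
    "\<And>\<omega>. \<omega> \<in> space M \<Longrightarrow> \<omega> \<notin> Nul \<Longrightarrow> (B 0 \<omega> = 0 \<and> continuous_on {0..} (\<lambda>t. B t \<omega>)) \<and>
       (\<forall>t\<ge>0. G (B t \<omega>) t = G (B 0 \<omega>) 0 + integral {0..t} (\<lambda>s. D (B s \<omega>) s) + \<sigma> * J t \<omega>)"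
  proof -
    have "AE \<omega> in M. (B 0 \<omega> = 0 \<and> continuous_on {0..} (\<lambda>t. B t \<omega>)) \<and>
       (\<forall>t\<ge>0. G (B t \<omega>) t = G (B 0 \<omega>) 0 + integral {0..t} (\<lambda>s. D (B s \<omega>) s) + \<sigma> * J t \<omega>)"
      using AE0 eq by (rule AE_conjI)
    then obtain Nul where "{\<omega>\<in>space M. \<not> ((B 0 \<omega> = 0 \<and> continuous_on {0..} (\<lambda>t. B t \<omega>)) \<and>
       (\<forall>t\<ge>0. G (B t \<omega>) t = G (B 0 \<omega>) 0 + integral {0..t} (\<lambda>s. D (B s \<omega>) s) + \<sigma> * J t \<omega>))} \<subseteq> Nul"
      "emeasure M Nul = 0" "Nul \<in> sets M"
      by (rule AE_E)
    note h = this
    show ?thesis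
    proof (rule that[of Nul])
      show "Nul \<in> null_sets M" using h(2,3) by (simp add: null_sets_def)
      fix \<omega> assume "\<omega> \<in> space M" "\<omega> \<notin> Nul"
      then show "(B 0 \<omega> = 0 \<and> continuous_on {0..} (\<lambda>t. B t \<omega>)) \<and>
       (\<forall>t\<ge>0. G (B t \<omega>) t = G (B 0 \<omega>) 0 + integral {0..t} (\<lambda>s. D (B s \<omega>) s) + \<sigma> * J t \<omega>)"
        using h(1) by blast
    qed
  qed
  have Nul_s: "Nul \<in> events" using Nul(1) by auto
  define V where "V x = a - q * exp (\<sigma> * x)" for x
  define \<gamma> where "\<gamma> = \<bar>V 1 - V 0\<bar>"
  have ga: "0 < \<gamma>"
  proof -
    have "exp \<sigma> \<noteq> 1" using sig by simp
    then have "V 1 - V 0 \<noteq> 0" using q by (simp add: V_def algebra_simps)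
    then show ?thesis by (simp add: \<gamma>_def)
  qed
  have Vc: "continuous_on UNIV V" unfolding V_def[abs_def] by (intro continuous_intros)
  obtain r0 where r0: "0 < r0" "\<And>x. dist x 0 < r0 \<Longrightarrow> dist (V x) (V 0) < \<gamma> / 8"
    using Vc ga unfolding continuous_on_iff by (metis UNIV_I zero_less_divide_iff zero_less_numeral)
  obtain r1 where r1: "0 < r1" "\<And>x. dist x 1 < r1 \<Longrightarrow> dist (V x) (V 1) < \<gamma> / 8"
    using Vc ga unfolding continuous_on_iff by (metis UNIV_I zero_less_divide_iff zero_less_numeral)
  define r where "r = min r0 r1"
  have r: "0 < r" "r \<le> r0" "r \<le> r1" using r0 r1 by (auto simp: r_def)
  define X where "X \<omega> = B t0 \<omega> - B 0 \<omega>" for \<omega>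
  have Xm[measurable]: "X \<in> borel_measurable M" unfolding X_def[abs_def] by measurable
  define A1 where "A1 = {\<omega> \<in> space M. 0 < X \<omega> \<and> X \<omega> < r}"
  define A2 where "A2 = {\<omega> \<in> space M. 1 < X \<omega> \<and> X \<omega> < 1 + r}"
  have A1s: "A1 \<in> events" unfolding A1_def by measurable
  have A2s: "A2 \<in> events" unfolding A2_def by measurable
  have p1: "0 < prob A1" unfolding A1_def X_def using pos_prob[of 0 t0 0 r] t0 r by simp
  have p2: "0 < prob A2" unfolding A2_def X_def using pos_prob[of 0 t0 1 "1 + r"] t0 r by simp
  have VA1: "\<bar>V (X \<omega>) - V 0\<bar> < \<gamma> / 8" if "\<omega> \<in> A1" for \<omega>
    using r0(2)[of "X \<omega>"] that r by (auto simp: A1_def dist_real_def)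
  have VA2: "\<bar>V (X \<omega>) - V 1\<bar> < \<gamma> / 8" if "\<omega> \<in> A2" for \<omega>
    using r1(2)[of "X \<omega>"] that r by (auto simp: A2_def dist_real_def)
  define \<theta> where "\<theta> = min (prob A1) (prob A2) / 4"
  have th: "0 < \<theta>" "\<theta> \<le> prob A1 / 4" "\<theta> \<le> prob A2 / 4" using p1 p2 by (auto simp: \<theta>_def)
  obtain K :: nat where K: "prob (Ebig t0 (real K)) < \<theta> / 3"
    using order_tendstoD(2)[OF Ebig_lim[OF t0], of "\<theta> / 3"] th unfolding eventually_sequentially by auto
  define EK where "EK = exp (\<bar>\<sigma>\<bar> * real K)"
  have EK: "1 \<le> EK" by (simp add: EK_def)
  define \<zeta> where "\<zeta> = \<gamma> / (16 * EK)"
  have ze: "0 < \<zeta>" using ga EK by (simp add: \<zeta>_def)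
  obtain d where d: "0 < d" "\<And>x x' s s'. \<bar>x\<bar> \<le> real K \<Longrightarrow> \<bar>x'\<bar> \<le> real K \<Longrightarrow> s \<in> {t0..2*t0} \<Longrightarrow> s' \<in> {t0..2*t0} \<Longrightarrow>
            \<bar>x - x'\<bar> < d \<Longrightarrow> \<bar>s - s'\<bar> < d \<Longrightarrow> \<bar>D x s - D x' s'\<bar> < \<zeta>"
    using compact_ucont2[OF Dc1 ze, of "real K"] by blast
  obtain m0 where m0: "\<And>m. m \<ge> m0 \<Longrightarrow> prob (Osc t0 m (d / 2)) < \<theta> / 3"
    using order_tendstoD(2)[OF Osc_lim[OF t0, of "d / 2"], of "\<theta> / 3"] th d unfolding eventually_sequentially by auto
  define \<tau>0 where "\<tau>0 = min t0 (d / 2)"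
  have tau0: "0 < \<tau>0" using t0 d by (simp add: \<tau>0_def)
  obtain m1 :: nat where m1: "t0 / \<tau>0 < real m1" using reals_Archimedean2 by blast
  define m' where "m' = max m0 m1"
  define m where "m = Suc m'"
  define \<tau> where "\<tau> = t0 / real m"
  have mpos: "0 < m" by (simp add: m_def)
  have tau: "0 < \<tau>" "\<tau> \<le> \<tau>0"
  proof -
    show "0 < \<tau>" using t0 by (simp add: \<tau>_def m_def)
    have "t0 / \<tau>0 < real m" using m1 by (simp add: m_def m'_def)
    then have "t0 < \<tau>0 * real m" using tau0 by (simp add: field_simps)
    then show "\<tau> \<le> \<tau>0" using mpos by (simp add: \<tau>_def field_simps)
  qed
  have tau_le: "\<tau> \<le> t0" "\<tau> \<le> d / 2" using tau(2) unfolding \<tau>0_def by auto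
  have Osc_small: "prob (Osc t0 m' (d / 2)) < \<theta> / 3" using m0 by (simp add: m'_def)
  define t1 where "t1 = t0 + \<tau>"
  have t1: "t0 < t1" "t1 \<le> 2 * t0" "0 \<le> t1" using tau tau_le t0 by (auto simp: t1_def)
  have Bt1m[measurable]: "B t1 \<in> borel_measurable M" using t1(3) by (rule Bmeas)
  define c where "c = \<gamma> * \<tau> / (16 * EK * \<bar>\<sigma>\<bar>)"
  have c: "0 < c" using ga tau EK sig by (simp add: c_def)
  obtain n where npos: "0 < n" and Rn: "prob {\<omega> \<in> space M. c < \<bar>J (t0 + t0 / real m) \<omega> - J t0 \<omega> -
      (\<Sum>k\<in>{m * n..<(m + 1) * n}. G (B (real k * (t0 / real (m * n))) \<omega>) (real k * (t0 / real (m * n))) *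
          (B (real (Suc k) * (t0 / real (m * n))) \<omega> - B (real k * (t0 / real (m * n))) \<omega>))\<bar>} < \<theta> / 3"
    using Rconv[OF J Ym t0 mpos c, of "\<theta> / 3"] th by auto
  define \<delta> where "\<delta> = t0 / real (m * n)"
  have dpos: "0 < \<delta>" using t0 mpos npos by (simp add: \<delta>_def)
  have dt0: "real (m * n) * \<delta> = t0" using mpos npos by (simp add: \<delta>_def)
  have dn: "real n * \<delta> = \<tau>" using mpos npos by (simp add: \<delta>_def \<tau>_def field_simps)
  have dt1: "real ((m + 1) * n) * \<delta> = t1"
  proof -
    have "real ((m + 1) * n) * \<delta> = real (m * n) * \<delta> + real n * \<delta>" by (simp add: algebra_simps)
    then show ?thesis using dt0 dn by (simp add: t1_def)
  qed
  have tt: "t0 + t0 / real m = t1" by (simp add: t1_def \<tau>_def)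
  define S where "S \<omega> = (\<Sum>k\<in>{m * n..<(m + 1) * n}. G (B (real k * \<delta>) \<omega>) (real k * \<delta>) *
        (B (real (Suc k) * \<delta>) \<omega> - B (real k * \<delta>) \<omega>))" for \<omega>
  have Sm[measurable]: "S \<in> borel_measurable M"
  proof -
    have "0 \<le> real k * \<delta>" "0 \<le> real (Suc k) * \<delta>" for k using dpos by auto
    then show ?thesis unfolding S_def[abs_def]
      by (intro borel_measurable_sum borel_measurable_times borel_measurable_diff Ym Bmeas) auto
  qed
  have Jt0m[measurable]: "J t0 \<in> borel_measurable M" using Jm t0' by auto
  have Jt1m[measurable]: "J t1 \<in> borel_measurable M" using Jm t1(3) by auto
  have R3: "prob {\<omega> \<in> space M. c < \<bar>J t1 \<omega> - J t0 \<omega> - S \<omega>\<bar>} < \<theta> / 3"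
    using Rn unfolding tt \<delta>_def[symmetric] S_def .
  define W where "W \<omega> = (\<phi> t1 * exp (\<sigma> * (\<Sum>i\<in>{m * n..<(m + 1) * n}. inc \<delta> i \<omega>)) - \<phi> t0
       - \<sigma> * (\<Sum>k\<in>{m * n..<(m + 1) * n}. \<phi> (real k * \<delta>) * exp (\<sigma> * (\<Sum>i\<in>{m * n..<k}. inc \<delta> i \<omega>)) * inc \<delta> k \<omega>)) / \<tau>" for \<omega>
  note F = inc_facts[OF dpos]
  have Wfad: "fadapted (inc \<delta>) {m * n..<(m + 1) * n} W"
  proof -
    have e1: "fadapted (inc \<delta>) {m * n..<(m + 1) * n} (\<lambda>\<omega>. \<Sum>i\<in>{m * n..<k}. inc \<delta> i \<omega>)" if "k \<le> (m + 1) * n" for k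
      by (rule fad_sum) (use that in \<open>auto intro: fad_var\<close>)
    have g: "(\<lambda>x. exp (\<sigma> * x)) \<in> borel_measurable borel" by measurable
    have e2: "fadapted (inc \<delta>) {m * n..<(m + 1) * n} (\<lambda>\<omega>. exp (\<sigma> * (\<Sum>i\<in>{m * n..<k}. inc \<delta> i \<omega>)))" if "k \<le> (m + 1) * n" for k
      by (rule fad_map[OF e1[OF that] g])
    have e3: "fadapted (inc \<delta>) {m * n..<(m + 1) * n} (\<lambda>\<omega>. \<Sum>k\<in>{m * n..<(m + 1) * n}. \<phi> (real k * \<delta>) * exp (\<sigma> * (\<Sum>i\<in>{m * n..<k}. inc \<delta> i \<omega>)) * inc \<delta> k \<omega>)"
    proof (rule fad_sum)
      fix k assume k: "k \<in> {m * n..<(m + 1) * n}"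
      show "fadapted (inc \<delta>) {m * n..<(m + 1) * n} (\<lambda>\<omega>. \<phi> (real k * \<delta>) * exp (\<sigma> * (\<Sum>i\<in>{m * n..<k}. inc \<delta> i \<omega>)) * inc \<delta> k \<omega>)"
        by (rule fad_mult[OF fad_mult[OF fad_const e2] fad_var]) (use k in auto)
    qed simp
    have num: "fadapted (inc \<delta>) {m * n..<(m + 1) * n} (\<lambda>\<omega>. \<phi> t1 * exp (\<sigma> * (\<Sum>i\<in>{m * n..<(m + 1) * n}. inc \<delta> i \<omega>)) - \<phi> t0
       - \<sigma> * (\<Sum>k\<in>{m * n..<(m + 1) * n}. \<phi> (real k * \<delta>) * exp (\<sigma> * (\<Sum>i\<in>{m * n..<k}. inc \<delta> i \<omega>)) * inc \<delta> k \<omega>))"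
      by (rule fad_diff[OF fad_diff[OF fad_mult[OF fad_const e2[OF order.refl]] fad_const] fad_mult[OF fad_const e3]])
    show ?thesis unfolding W_def[abs_def] by (rule fad_map[OF num]) simp
  qed
  have Wm[measurable]: "W \<in> borel_measurable M" by (rule fad_measurable[OF _ Wfad]) (use F(2) in auto)
  have Xfad: "fadapted (inc \<delta>) {..<m * n} X"
  proof -
    have "X = psum \<delta> (m * n)" unfolding X_def psum_eq[abs_def] dt0 ..
    then show ?thesis using fad_psum[of "m * n" "m * n" \<delta>] by simp
  qed
  define Bad where "Bad = {\<omega> \<in> space M. \<gamma> / 8 < \<bar>W \<omega> - V (X \<omega>)\<bar>}"
  have Bads: "Bad \<in> events" unfolding Bad_def V_def by measurable
  have grid_in: "t0 \<le> real k * \<delta> \<and> real k * \<delta> \<le> t1" if "m * n \<le> k" "k \<le> (m + 1) * n" for k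
  proof -
    have k1: "real (m * n) \<le> real k" using that(1) by (simp only: of_nat_le_iff)
    have k2: "real k \<le> real ((m + 1) * n)" using that(2) by (simp only: of_nat_le_iff)
    have "real (m * n) * \<delta> \<le> real k * \<delta>" "real k * \<delta> \<le> real ((m + 1) * n) * \<delta>"
      using mult_right_mono[OF k1, of \<delta>] mult_right_mono[OF k2, of \<delta>] dpos by auto
    then show ?thesis using dt0 dt1 by simp
  qed
  have incl: "Bad \<subseteq> Ebig t0 (real K) \<union> Osc t0 m' (d / 2) \<union> {\<omega> \<in> space M. c < \<bar>J t1 \<omega> - J t0 \<omega> - S \<omega>\<bar>} \<union> Nul"
  proof
    fix \<omega> assume w: "\<omega> \<in> Bad"
    show "\<omega> \<in> Ebig t0 (real K) \<union> Osc t0 m' (d / 2) \<union> {\<omega> \<in> space M. c < \<bar>J t1 \<omega> - J t0 \<omega> - S \<omega>\<bar>} \<union> Nul"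
    proof (rule ccontr)
      assume nw: "\<omega> \<notin> Ebig t0 (real K) \<union> Osc t0 m' (d / 2) \<union> {\<omega> \<in> space M. c < \<bar>J t1 \<omega> - J t0 \<omega> - S \<omega>\<bar>} \<union> Nul"
      have sp: "\<omega> \<in> space M" and bw: "\<gamma> / 8 < \<bar>W \<omega> - V (X \<omega>)\<bar>" using w by (auto simp: Bad_def)
      have nX: "\<omega> \<notin> Ebig t0 (real K)" "\<omega> \<notin> Osc t0 m' (d / 2)" "\<bar>J t1 \<omega> - J t0 \<omega> - S \<omega>\<bar> \<le> c" "\<omega> \<notin> Nul"
        using nw sp by auto
      have B0: "B 0 \<omega> = 0" and cont: "continuous_on {0..} (\<lambda>t. B t \<omega>)"
        and EQ: "\<And>t. 0 \<le> t \<Longrightarrow> G (B t \<omega>) t = G (B 0 \<omega>) 0 + integral {0..t} (\<lambda>s. D (B s \<omega>) s) + \<sigma> * J t \<omega>"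
        using Nul(2)[OF sp nX(4)] by auto
      have hK: "\<bar>B s \<omega>\<bar> \<le> real K" if "t0 \<le> s" "s \<le> 2 * t0" for s
        by (rule Ebig_good[OF t0 sp nX(1) cont that])
      have Rt: "t0 * (1 + 1 / (real m' + 1)) = t1" using mpos by (simp add: t1_def \<tau>_def m_def field_simps)
      have hO: "\<bar>B s \<omega> - B t0 \<omega>\<bar> \<le> d / 2" if "t0 \<le> s" "s \<le> t1" for s
      proof (rule rat_dense_bound'[where f="\<lambda>s. B s \<omega> - B t0 \<omega>" and R="1 + 1 / (real m' + 1)"])
        show "continuous_on {0..} (\<lambda>s. B s \<omega> - B t0 \<omega>)" using cont by (intro continuous_intros)
        show "0 < t0" by (rule t0)
        show "1 \<le> 1 + 1 / (real m' + 1)" by simp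
        show "\<bar>B (t0 * r) \<omega> - B t0 \<omega>\<bar> \<le> d / 2" if "r \<in> \<rat>" "1 \<le> r" "r \<le> 1 + 1 / (real m' + 1)" for r
          by (rule Osc_good[OF sp nX(2) that])
        show "t0 \<le> s" by (rule that(1))
        show "s \<le> t0 * (1 + 1 / (real m' + 1))" using that(2) Rt by simp
      qed
      have tel: "(\<Sum>i\<in>{m * n..<k}. inc \<delta> i \<omega>) = B (real k * \<delta>) \<omega> - B t0 \<omega>" if "m * n \<le> k" for k
        unfolding inc_def using telescope_grid[OF that, of "\<lambda>t. B t \<omega>" \<delta>] dt0 by simp
      define E0 where "E0 = exp (\<sigma> * B t0 \<omega>)"
      have E0: "0 < E0" "1 \<le> EK * E0"
      proof -
        show "0 < E0" by (simp add: E0_def)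
        have "\<bar>\<sigma> * B t0 \<omega>\<bar> \<le> \<bar>\<sigma>\<bar> * real K" unfolding abs_mult using hK[of t0] t0 by (intro mult_left_mono) auto
        then have "0 \<le> \<bar>\<sigma>\<bar> * real K + \<sigma> * B t0 \<omega>" by linarith
        then have "1 \<le> exp (\<bar>\<sigma>\<bar> * real K + \<sigma> * B t0 \<omega>)" by simp
        then show "1 \<le> EK * E0" by (simp add: EK_def E0_def exp_add)
      qed
      have Wmul: "E0 * (W \<omega> * \<tau>) = G (B t1 \<omega>) t1 - G (B t0 \<omega>) t0 - \<sigma> * S \<omega>"
      proof -
        have "W \<omega> * \<tau> = \<phi> t1 * exp (\<sigma> * (B t1 \<omega> - B t0 \<omega>)) - \<phi> t0
             - \<sigma> * (\<Sum>k\<in>{m * n..<(m + 1) * n}. \<phi> (real k * \<delta>) * exp (\<sigma> * (B (real k * \<delta>) \<omega> - B t0 \<omega>)) * inc \<delta> k \<omega>)"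
        proof -
          have "(\<Sum>i\<in>{m * n..<(m + 1) * n}. inc \<delta> i \<omega>) = B t1 \<omega> - B t0 \<omega>" using tel[of "(m + 1) * n"] dt1 by simp
          moreover have "(\<Sum>k\<in>{m * n..<(m + 1) * n}. \<phi> (real k * \<delta>) * exp (\<sigma> * (\<Sum>i\<in>{m * n..<k}. inc \<delta> i \<omega>)) * inc \<delta> k \<omega>)
              = (\<Sum>k\<in>{m * n..<(m + 1) * n}. \<phi> (real k * \<delta>) * exp (\<sigma> * (B (real k * \<delta>) \<omega> - B t0 \<omega>)) * inc \<delta> k \<omega>)"
            by (rule sum.cong[OF refl]) (simp add: tel)
          ultimately show ?thesis using tau unfolding W_def by simp
        qed
        note h = this
        have gen: "w * t = P - b - \<sigma> * Sg \<Longrightarrow> E * (w * t) = E * P - E * b - \<sigma> * (E * Sg)" for w t P b Sg E :: real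
        proof -
          assume h: "w * t = P - b - \<sigma> * Sg"
          have "E * (w * t) = E * (P - b - \<sigma> * Sg)" by (simp only: h)
          also have "\<dots> = E * P - E * b - \<sigma> * (E * Sg)" by (simp add: algebra_simps)
          finally show ?thesis .
        qed
        have eE: "E0 * exp (\<sigma> * (x - B t0 \<omega>)) = exp (\<sigma> * x)" for x
          by (simp add: E0_def mult_exp_exp algebra_simps)
        have st1: "E0 * (W \<omega> * \<tau>) = E0 * (\<phi> t1 * exp (\<sigma> * (B t1 \<omega> - B t0 \<omega>))) - E0 * \<phi> t0
             - \<sigma> * (E0 * (\<Sum>k\<in>{m * n..<(m + 1) * n}. \<phi> (real k * \<delta>) * exp (\<sigma> * (B (real k * \<delta>) \<omega> - B t0 \<omega>)) * inc \<delta> k \<omega>))"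
          by (rule gen[OF h])
        have st2: "E0 * (\<Sum>k\<in>{m * n..<(m + 1) * n}. \<phi> (real k * \<delta>) * exp (\<sigma> * (B (real k * \<delta>) \<omega> - B t0 \<omega>)) * inc \<delta> k \<omega>)
            = (\<Sum>k\<in>{m * n..<(m + 1) * n}. \<phi> (real k * \<delta>) * exp (\<sigma> * B (real k * \<delta>) \<omega>) * inc \<delta> k \<omega>)"
          unfolding sum_distrib_left
        proof (rule sum.cong[OF refl])
          fix k
          show "E0 * (\<phi> (real k * \<delta>) * exp (\<sigma> * (B (real k * \<delta>) \<omega> - B t0 \<omega>)) * inc \<delta> k \<omega>) =
              \<phi> (real k * \<delta>) * exp (\<sigma> * B (real k * \<delta>) \<omega>) * inc \<delta> k \<omega>"
            using eE[of "B (real k * \<delta>) \<omega>"] by (simp add: ac_simps)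
        qed
        have st3: "E0 * (\<phi> t1 * exp (\<sigma> * (B t1 \<omega> - B t0 \<omega>))) = \<phi> t1 * exp (\<sigma> * B t1 \<omega>)"
          using eE[of "B t1 \<omega>"] by (simp add: ac_simps)
        have st4: "E0 * \<phi> t0 = \<phi> t0 * exp (\<sigma> * B t0 \<omega>)" by (simp add: E0_def)
        have st5: "(\<Sum>k\<in>{m * n..<(m + 1) * n}. \<phi> (real k * \<delta>) * exp (\<sigma> * B (real k * \<delta>) \<omega>) * inc \<delta> k \<omega>) = S \<omega>"
          unfolding S_def inc_def
        proof (rule sum.cong[OF refl])
          fix k assume "k \<in> {m * n..<(m + 1) * n}"
          then have "t0 \<le> real k * \<delta>" using grid_in[of k] by auto
          then show "\<phi> (real k * \<delta>) * exp (\<sigma> * B (real k * \<delta>) \<omega>) * (B (real (Suc k) * \<delta>) \<omega> - B (real k * \<delta>) \<omega>) =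
              G (B (real k * \<delta>) \<omega>) (real k * \<delta>) * (B (real (Suc k) * \<delta>) \<omega> - B (real k * \<delta>) \<omega>)"
            by (simp add: Gf)
        qed
        have st6: "G (B t1 \<omega>) t1 = \<phi> t1 * exp (\<sigma> * B t1 \<omega>)" using Gf t1 by simp
        have st7: "G (B t0 \<omega>) t0 = \<phi> t0 * exp (\<sigma> * B t0 \<omega>)" using Gf by simp
        show ?thesis unfolding st1 st2 st3 st4 st5 st6 st7 ..
      qed
      define f where "f s = D (B s \<omega>) s" for s
      have fc: "continuous_on {0..} f" unfolding f_def[abs_def] by (rule path_cont[OF Dc cont])
      define I where "I = integral {0..t1} f - integral {0..t0} f"
      define D0 where "D0 = D (B t0 \<omega>) t0"
      have hD0: "D0 = E0 * V (X \<omega>)"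
      proof -
        have "2 * \<sigma> * B t0 \<omega> = \<sigma> * B t0 \<omega> + \<sigma> * B t0 \<omega>" by simp
        then have e2: "exp (2 * \<sigma> * B t0 \<omega>) = E0 * E0" unfolding E0_def by (simp only: exp_add)
        have xv: "V (X \<omega>) = a - q * E0" unfolding V_def X_def E0_def B0 by simp
        show ?thesis unfolding D0_def Df e2 xv by (simp add: E0_def algebra_simps)
      qed
      have Ib: "\<bar>I - \<tau> * D0\<bar> \<le> \<zeta> * \<tau>"
      proof -
        have "\<bar>integral {0..t1} f - integral {0..t0} f - (t1 - t0) * D0\<bar> \<le> \<zeta> * (t1 - t0)"
        proof (rule integral_diff_bound[OF fc t0' less_imp_le[OF t1(1)]])
          fix s assume s: "t0 \<le> s" "s \<le> t1"
          have "\<bar>D (B s \<omega>) s - D (B t0 \<omega>) t0\<bar> < \<zeta>"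
          proof (rule d(2))
            show "\<bar>B s \<omega>\<bar> \<le> real K" using hK s t1 by auto
            show "\<bar>B t0 \<omega>\<bar> \<le> real K" using hK t0 by auto
            show "s \<in> {t0..2 * t0}" using s t1 by auto
            show "t0 \<in> {t0..2 * t0}" using t0 by auto
            show "\<bar>B s \<omega> - B t0 \<omega>\<bar> < d" using hO[OF s] d(1) by simp
            show "\<bar>s - t0\<bar> < d" using s tau_le(2) d(1) by (simp add: t1_def)
          qed
          then show "\<bar>f s - D0\<bar> \<le> \<zeta>" by (simp add: f_def D0_def)
        qed
        then show ?thesis by (simp add: I_def t1_def)
      qed
      have EQd: "G (B t1 \<omega>) t1 - G (B t0 \<omega>) t0 = I + \<sigma> * (J t1 \<omega> - J t0 \<omega>)"
        using EQ[OF t1(3)] EQ[OF t0'] unfolding I_def f_def by (simp add: algebra_simps)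
      have k1: "E0 * \<tau> * (W \<omega> - V (X \<omega>)) = E0 * (W \<omega> * \<tau>) - \<tau> * (E0 * V (X \<omega>))" by (simp add: algebra_simps)
      have k2: "E0 * \<tau> * (W \<omega> - V (X \<omega>)) = (G (B t1 \<omega>) t1 - G (B t0 \<omega>) t0 - \<sigma> * S \<omega>) - \<tau> * D0"
        unfolding k1 Wmul hD0 ..
      have keyeq: "E0 * \<tau> * (W \<omega> - V (X \<omega>)) = (I - \<tau> * D0) + \<sigma> * (J t1 \<omega> - J t0 \<omega> - S \<omega>)"
        unfolding k2 EQd by (simp add: algebra_simps)
      have "\<bar>\<sigma> * (J t1 \<omega> - J t0 \<omega> - S \<omega>)\<bar> \<le> \<bar>\<sigma>\<bar> * c" unfolding abs_mult using nX(3) by (intro mult_left_mono) auto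
      also have "\<bar>\<sigma>\<bar> * c = \<zeta> * \<tau>" using sig by (simp add: c_def \<zeta>_def)
      finally have b2: "\<bar>\<sigma> * (J t1 \<omega> - J t0 \<omega> - S \<omega>)\<bar> \<le> \<zeta> * \<tau>" .
      have "\<bar>E0 * \<tau> * (W \<omega> - V (X \<omega>))\<bar> \<le> 2 * \<zeta> * \<tau>"
        unfolding keyeq using Ib b2 abs_triangle_ineq[of "I - \<tau> * D0" "\<sigma> * (J t1 \<omega> - J t0 \<omega> - S \<omega>)"] by linarith
      then have "E0 * \<tau> * \<bar>W \<omega> - V (X \<omega>)\<bar> \<le> 2 * \<zeta> * \<tau>" using E0(1) tau(1) by (simp add: abs_mult)
      then have "E0 * \<bar>W \<omega> - V (X \<omega>)\<bar> \<le> 2 * \<zeta>" using tau(1) by (simp add: mult.commute mult.left_commute)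
      then have "EK * E0 * \<bar>W \<omega> - V (X \<omega>)\<bar> \<le> EK * (2 * \<zeta>)" using EK by (simp add: mult.assoc mult_left_mono)
      also have "EK * (2 * \<zeta>) = \<gamma> / 8" using EK by (simp add: \<zeta>_def)
      finally have "EK * E0 * \<bar>W \<omega> - V (X \<omega>)\<bar> \<le> \<gamma> / 8" .
      moreover have "\<bar>W \<omega> - V (X \<omega>)\<bar> \<le> EK * E0 * \<bar>W \<omega> - V (X \<omega>)\<bar>"
        using E0(2) by (simp add: mult_le_cancel_right1)
      ultimately show False using bw by simp
    qed
  qed
  have C3: "{\<omega> \<in> space M. c < \<bar>J t1 \<omega> - J t0 \<omega> - S \<omega>\<bar>} \<in> events" by measurable
  have PBad: "prob Bad < \<theta>"
  proof -
    have E1: "Ebig t0 (real K) \<in> events" by (rule Ebig_sets[OF t0])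
    have O1: "Osc t0 m' (d / 2) \<in> events" by (rule Osc_sets[OF t0])
    have "prob Bad \<le> prob (Ebig t0 (real K) \<union> Osc t0 m' (d / 2) \<union> {\<omega> \<in> space M. c < \<bar>J t1 \<omega> - J t0 \<omega> - S \<omega>\<bar>} \<union> Nul)"
      by (rule finite_measure_mono[OF incl]) (use E1 O1 C3 Nul_s in auto)
    also have "\<dots> \<le> prob (Ebig t0 (real K) \<union> Osc t0 m' (d / 2) \<union> {\<omega> \<in> space M. c < \<bar>J t1 \<omega> - J t0 \<omega> - S \<omega>\<bar>}) + prob Nul"
      by (rule prob_Un_le) (use E1 O1 C3 Nul_s in auto)
    also have "\<dots> \<le> prob (Ebig t0 (real K) \<union> Osc t0 m' (d / 2)) + prob {\<omega> \<in> space M. c < \<bar>J t1 \<omega> - J t0 \<omega> - S \<omega>\<bar>} + prob Nul"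
      using prob_Un_le[of "Ebig t0 (real K) \<union> Osc t0 m' (d / 2)" "{\<omega> \<in> space M. c < \<bar>J t1 \<omega> - J t0 \<omega> - S \<omega>\<bar>}"] E1 O1 C3 by auto
    also have "\<dots> \<le> prob (Ebig t0 (real K)) + prob (Osc t0 m' (d / 2)) + prob {\<omega> \<in> space M. c < \<bar>J t1 \<omega> - J t0 \<omega> - S \<omega>\<bar>} + prob Nul"
      using prob_Un_le[OF E1 O1] by simp
    also have "\<dots> < \<theta> / 3 + \<theta> / 3 + \<theta> / 3 + 0"
      using K Osc_small R3 Nul(1) by (simp add: measure_eq_0_null_sets)
    finally show ?thesis by simp
  qed
  define Sw where "Sw = {w::real. \<bar>w - V 0\<bar> \<le> \<gamma> / 4}"
  have Sws: "Sw \<in> sets borel" unfolding Sw_def by measurable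
  define Wset where "Wset = {\<omega> \<in> space M. W \<omega> \<in> Sw}"
  have Wsets: "Wset \<in> events" unfolding Wset_def using Sws by measurable
  have indep: "prob (A \<inter> Wset) = prob A * prob Wset" if "A = {\<omega> \<in> space M. X \<omega> \<in> {u<..<v}}" for A u v
  proof -
    have "prob ({\<omega> \<in> space M. X \<omega> \<in> {u<..<v}} \<inter> {\<omega> \<in> space M. W \<omega> \<in> Sw})
        = prob {\<omega> \<in> space M. X \<omega> \<in> {u<..<v}} * prob {\<omega> \<in> space M. W \<omega> \<in> Sw}"
      by (rule fad_indep_events[OF F(1)[of "(m + 1) * n"] _ _ _ Xfad Wfad _ Sws]) auto
    then show ?thesis using that unfolding Wset_def by simp
  qed
  have i1: "prob (A1 \<inter> Wset) = prob A1 * prob Wset" by (rule indep) (auto simp: A1_def)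
  have i2: "prob (A2 \<inter> Wset) = prob A2 * prob Wset" by (rule indep) (auto simp: A2_def)
  have s1: "A1 \<subseteq> (A1 \<inter> Wset) \<union> Bad"
  proof
    fix \<omega> assume w: "\<omega> \<in> A1"
    show "\<omega> \<in> (A1 \<inter> Wset) \<union> Bad"
    proof (cases "\<omega> \<in> Bad")
      case False
      then have "\<bar>W \<omega> - V (X \<omega>)\<bar> \<le> \<gamma> / 8" using w by (auto simp: Bad_def A1_def)
      moreover have "\<bar>V (X \<omega>) - V 0\<bar> < \<gamma> / 8" by (rule VA1[OF w])
      ultimately have "\<bar>W \<omega> - V 0\<bar> \<le> \<gamma> / 4" by linarith
      then show ?thesis using w by (auto simp: Wset_def Sw_def A1_def)
    qed simp
  qed
  have s2: "A2 \<inter> Wset \<subseteq> Bad"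
  proof
    fix \<omega> assume w: "\<omega> \<in> A2 \<inter> Wset"
    then have a: "\<bar>W \<omega> - V 0\<bar> \<le> \<gamma> / 4" "\<omega> \<in> space M" by (auto simp: Wset_def Sw_def)
    have b: "\<bar>V (X \<omega>) - V 1\<bar> < \<gamma> / 8" using VA2 w by auto
    have "\<gamma> = \<bar>V 1 - V 0\<bar>" by (simp add: \<gamma>_def)
    then have "\<gamma> / 8 < \<bar>W \<omega> - V (X \<omega>)\<bar>" using a(1) b ga by linarith
    then show "\<omega> \<in> Bad" using a(2) by (simp add: Bad_def)
  qed
  have q1: "prob A1 \<le> prob A1 * prob Wset + prob Bad"
  proof -
    have "prob A1 \<le> prob ((A1 \<inter> Wset) \<union> Bad)" by (rule finite_measure_mono[OF s1]) (use A1s Wsets Bads in auto)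
    also have "\<dots> \<le> prob (A1 \<inter> Wset) + prob Bad" by (rule prob_Un_le) (use A1s Wsets Bads in auto)
    finally show ?thesis using i1 by simp
  qed
  have q2: "prob A2 * prob Wset \<le> prob Bad"
    using finite_measure_mono[OF s2 Bads] i2 by simp
  have "prob A1 * (3 / 4) \<le> prob A1 * prob Wset" using q1 PBad th by linarith
  then have w1: "3 / 4 \<le> prob Wset" using p1 by (simp add: mult_le_cancel_left_pos)
  have "prob A2 * prob Wset < prob A2 * (1 / 4)" using q2 PBad th by linarith
  then have w2: "prob Wset < 1 / 4" using p2 by (simp add: mult_less_cancel_left_pos)
  show False using w1 w2 by simp
qed

end



lemma theta_const:
  fixes \<Theta> \<Theta>' :: "real \<Rightarrow> real"
  assumes d: "\<And>y. (\<Theta> has_real_derivative \<Theta>' y) (at y)" and z: "\<And>y. \<Theta> y * \<Theta>' y = 0"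
  shows "\<exists>k. \<forall>y. \<Theta> y = k"
proof -
  have sq: "\<Theta> y * \<Theta> y = \<Theta> 0 * \<Theta> 0" for y
  proof -
    have "\<forall>x. ((\<lambda>y. \<Theta> y * \<Theta> y) has_real_derivative 0) (at x)"
    proof
      fix x
      have "((\<lambda>y. \<Theta> y * \<Theta> y) has_real_derivative \<Theta>' x * \<Theta> x + \<Theta>' x * \<Theta> x) (at x)"
        by (rule DERIV_mult[OF d d])
      then show "((\<lambda>y. \<Theta> y * \<Theta> y) has_real_derivative 0) (at x)" using z[of x] by (simp add: mult.commute)
    qed
    from DERIV_isconst_all[OF this] show ?thesis .
  qed
  have cont: "continuous_on UNIV \<Theta>"
    using d by (intro continuous_at_imp_continuous_on ballI) (auto intro: DERIV_isCont)
  show ?thesis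
  proof (intro exI allI)
    fix y
    show "\<Theta> y = \<Theta> 0"
    proof (rule ccontr)
      assume ne: "\<Theta> y \<noteq> \<Theta> 0"
      have "(\<Theta> y - \<Theta> 0) * (\<Theta> y + \<Theta> 0) = 0" using sq[of y] by (simp add: algebra_simps)
      then have opp: "\<Theta> y = - \<Theta> 0" using ne by simp
      then have nz: "\<Theta> 0 \<noteq> 0" using ne by auto
      define a where "a = min 0 y"
      define b where "b = max 0 y"
      have ab: "a \<le> b" by (simp add: a_def b_def)
      have fa: "\<Theta> a = - \<Theta> b" using opp by (auto simp: a_def b_def min_def max_def)
      have cab: "continuous_on {a..b} \<Theta>" using cont by (rule continuous_on_subset) simp
      obtain w where w: "\<Theta> w = 0"
      proof (cases "\<Theta> a \<le> 0")
        case True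
        then have "0 \<le> \<Theta> b" using fa by simp
        then obtain w where "a \<le> w" "w \<le> b" "\<Theta> w = 0" using IVT'[OF True _ ab cab] by blast
        then show ?thesis using that by blast
      next
        case False
        then have "\<Theta> b \<le> 0" using fa by simp
        then obtain w where "a \<le> w" "w \<le> b" "\<Theta> w = 0" using IVT2'[OF _ _ ab cab, of 0] False by force
        then show ?thesis using that by blast
      qed
      have "\<Theta> 0 * \<Theta> 0 = 0" using sq[of w] w by simp
      then show False using nz by simp
    qed
  qed
qed

theorem mainTheorem2:
  fixes M :: "'a measure" and \<beta> :: "real \<Rightarrow> 'a \<Rightarrow> real"
    and \<nu> \<sigma> l c :: real
    and \<Theta> \<Theta>' \<Theta>'' :: "real \<Rightarrow> real"
    and h hb hbb ht :: "real \<Rightarrow> real \<Rightarrow> real"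
  assumes nu: "\<nu> > 0" and sigma: "\<sigma> \<noteq> 0" and l: "l \<noteq> 0"
    and BM: "std_brownian_motion M \<beta>"
    and Theta1: "\<And>y. (\<Theta> has_real_derivative \<Theta>' y) (at y)"
    and Theta2: "\<And>y. (\<Theta>' has_real_derivative \<Theta>'' y) (at y)"
    and Theta2c: "continuous_on UNIV \<Theta>''"
    and h_b: "\<And>b t. t \<ge> 0 \<Longrightarrow> ((\<lambda>b. h b t) has_real_derivative hb b t) (at b)"
    and h_bb: "\<And>b t. t \<ge> 0 \<Longrightarrow> ((\<lambda>b. hb b t) has_real_derivative hbb b t) (at b)"
    and h_t: "\<And>b t. t \<ge> 0 \<Longrightarrow> ((\<lambda>t. h b t) has_real_derivative ht b t) (at t within {0..})"
    and h_cont: "continuous_on (UNIV \<times> {0..}) (\<lambda>(b, t). h b t)"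
    and hb_cont: "continuous_on (UNIV \<times> {0..}) (\<lambda>(b, t). hb b t)"
    and hbb_cont: "continuous_on (UNIV \<times> {0..}) (\<lambda>(b, t). hbb b t)"
    and ht_cont: "continuous_on (UNIV \<times> {0..}) (\<lambda>(b, t). ht b t)"
    and h_nz: "\<And>b t. t \<ge> 0 \<Longrightarrow> h b t \<noteq> 0"
    and solves: "\<forall>x. \<exists>J. is_ito_integral M \<beta>
                    (\<lambda>s \<omega>. \<Theta> (l * x - c * s) * h (\<beta> s \<omega>) s) J \<and>
        (AE \<omega> in M. \<forall>t\<ge>0.
           \<Theta> (l * x - c * t) * h (\<beta> t \<omega>) t =
             \<Theta> (l * x) * h (\<beta> 0 \<omega>) 0
             + integral {0..t} (\<lambda>s.
                  \<nu> * deriv (deriv (\<lambda>y. \<Theta> (l * y - c * s) * h (\<beta> s \<omega>) s)) x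
                  - \<Theta> (l * x - c * s) * h (\<beta> s \<omega>) s
                    * deriv (\<lambda>y. \<Theta> (l * y - c * s) * h (\<beta> s \<omega>) s) x)
             + \<sigma> * J t \<omega>)"
  shows "\<exists>k. \<forall>y. \<Theta> y = k"
proof -
  interpret bmx M \<beta> by unfold_locales (rule BM)
  have Tc: "continuous_on UNIV \<Theta>"
    using Theta1 by (intro continuous_at_imp_continuous_on ballI) (auto intro: DERIV_isCont)
  have T'c: "continuous_on UNIV \<Theta>'"
    using Theta2 by (intro continuous_at_imp_continuous_on ballI) (auto intro: DERIV_isCont)
  have dT: "((\<lambda>y. \<Theta> (l * y - c * s)) has_real_derivative \<Theta>' (l * y - c * s) * l) (at y)" for s y
    by (rule DERIV_chain2[OF Theta1]) (auto intro!: derivative_eq_intros)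
  have dT': "((\<lambda>y. \<Theta>' (l * y - c * s)) has_real_derivative \<Theta>'' (l * y - c * s) * l) (at y)" for s y
    by (rule DERIV_chain2[OF Theta2]) (auto intro!: derivative_eq_intros)
  have dd1: "deriv (\<lambda>y. \<Theta> (l * y - c * s) * K) = (\<lambda>y. \<Theta>' (l * y - c * s) * l * K)" for s K
    by (rule ext, rule DERIV_imp_deriv, rule DERIV_cmult_right[OF dT])
  have dd2: "deriv (\<lambda>y. \<Theta>' (l * y - c * s) * l * K) x = \<Theta>'' (l * x - c * s) * l * l * K" for s K x
  proof -
    have "((\<lambda>y. \<Theta>' (l * y - c * s) * l * K) has_real_derivative \<Theta>'' (l * x - c * s) * l * l * K) (at x)"
      by (rule DERIV_cmult_right[OF DERIV_cmult_right[OF dT']])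
    then show ?thesis by (rule DERIV_imp_deriv)
  qed
  define Gx where "Gx x b s = \<Theta> (l * x - c * s) * h b s" for x b s
  define Dx where "Dx x b s = \<nu> * (\<Theta>'' (l * x - c * s) * l * l * h b s)
       - \<Theta> (l * x - c * s) * h b s * (\<Theta>' (l * x - c * s) * l * h b s)" for x b s
  have sol: "\<exists>J. is_ito_integral M \<beta> (\<lambda>s \<omega>. Gx x (\<beta> s \<omega>) s) J \<and>
     (AE \<omega> in M. \<forall>t\<ge>0. Gx x (\<beta> t \<omega>) t = Gx x (\<beta> 0 \<omega>) 0 + integral {0..t} (\<lambda>s. Dx x (\<beta> s \<omega>) s) + \<sigma> * J t \<omega>)" for x
  proof -
    obtain J where J: "is_ito_integral M \<beta> (\<lambda>s \<omega>. \<Theta> (l * x - c * s) * h (\<beta> s \<omega>) s) J"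
      "AE \<omega> in M. \<forall>t\<ge>0.
           \<Theta> (l * x - c * t) * h (\<beta> t \<omega>) t =
             \<Theta> (l * x) * h (\<beta> 0 \<omega>) 0
             + integral {0..t} (\<lambda>s.
                  \<nu> * deriv (deriv (\<lambda>y. \<Theta> (l * y - c * s) * h (\<beta> s \<omega>) s)) x
                  - \<Theta> (l * x - c * s) * h (\<beta> s \<omega>) s
                    * deriv (\<lambda>y. \<Theta> (l * y - c * s) * h (\<beta> s \<omega>) s) x)
             + \<sigma> * J t \<omega>"
      using solves by blast
    show ?thesis
    proof (intro exI conjI)
      show "is_ito_integral M \<beta> (\<lambda>s \<omega>. Gx x (\<beta> s \<omega>) s) J" using J(1) by (simp add: Gx_def)
      show "AE \<omega> in M. \<forall>t\<ge>0. Gx x (\<beta> t \<omega>) t = Gx x (\<beta> 0 \<omega>) 0 + integral {0..t} (\<lambda>s. Dx x (\<beta> s \<omega>) s) + \<sigma> * J t \<omega>"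
        using J(2) by (simp add: Gx_def Dx_def dd1 dd2)
    qed
  qed
  have cTh: "continuous_on S (\<lambda>p::real \<times> real. f (a - c * snd p))" if "continuous_on UNIV f" for f a S
    by (rule continuous_on_compose2[OF that]) (auto intro!: continuous_intros)
  have hc': "continuous_on (UNIV \<times> {0..}) (\<lambda>p. h (fst p) (snd p))" using h_cont by (simp add: case_prod_unfold)
  have hbc': "continuous_on (UNIV \<times> {0..}) (\<lambda>p. hb (fst p) (snd p))" using hb_cont by (simp add: case_prod_unfold)
  have htc': "continuous_on (UNIV \<times> {0..}) (\<lambda>p. ht (fst p) (snd p))" using ht_cont by (simp add: case_prod_unfold)
  have sub: "UNIV \<times> {0<..} \<subseteq> UNIV \<times> ({0..}::real set)" by auto
  have GcX: "continuous_on (UNIV \<times> {0..}) (\<lambda>(b, s). Gx x b s)" for x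
    unfolding Gx_def case_prod_unfold by (intro continuous_on_mult cTh[OF Tc] hc')
  have DcX: "continuous_on (UNIV \<times> {0..}) (\<lambda>(b, s). Dx x b s)" for x
    unfolding Dx_def case_prod_unfold
    by (intro continuous_on_diff continuous_on_mult continuous_on_const cTh[OF Tc] cTh[OF T'c] cTh[OF Theta2c] hc')
  have GbcX: "continuous_on (UNIV \<times> {0<..}) (\<lambda>(b, s). \<Theta> (l * x - c * s) * hb b s)" for x
    unfolding case_prod_unfold by (intro continuous_on_mult cTh[OF Tc] continuous_on_subset[OF hbc' sub])
  have GtcX: "continuous_on (UNIV \<times> {0<..}) (\<lambda>(b, s). \<Theta>' (l * x - c * s) * (- c) * h b s + ht b s * \<Theta> (l * x - c * s))" for x
    unfolding case_prod_unfold
    by (intro continuous_on_mult continuous_on_add continuous_on_const cTh[OF Tc] cTh[OF T'c]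
        continuous_on_subset[OF hc' sub] continuous_on_subset[OF htc' sub])
  have ht_at: "((\<lambda>t. h b t) has_real_derivative ht b s) (at s)" if "0 < s" for b s
  proof -
    have "s \<in> interior {0..}" using that by simp
    then show ?thesis using h_t[of s b] that at_within_interior[of s "{0..}"] by simp
  qed
  have A: "\<Theta> (l * x - c * t0) * hb b t0 = \<sigma> * (\<Theta> (l * x - c * t0) * h b t0)" if t0: "0 < t0" for x t0 b
  proof -
    obtain J where J: "is_ito_integral M \<beta> (\<lambda>s \<omega>. Gx x (\<beta> s \<omega>) s) J"
      "AE \<omega> in M. \<forall>t\<ge>0. Gx x (\<beta> t \<omega>) t = Gx x (\<beta> 0 \<omega>) 0 + integral {0..t} (\<lambda>s. Dx x (\<beta> s \<omega>) s) + \<sigma> * J t \<omega>"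
      using sol[of x] by blast
    have Gb: "((\<lambda>b. Gx x b s) has_real_derivative \<Theta> (l * x - c * s) * hb b s) (at b)" if "0 < s" for b s
      unfolding Gx_def by (rule DERIV_cmult[OF h_b]) (use that in simp)
    have Gt: "((\<lambda>s. Gx x b s) has_real_derivative \<Theta>' (l * x - c * s) * (- c) * h b s + ht b s * \<Theta> (l * x - c * s)) (at s)"
      if "0 < s" for b s
    proof -
      have d1: "((\<lambda>s. \<Theta> (l * x - c * s)) has_real_derivative \<Theta>' (l * x - c * s) * (- c)) (at s)"
        by (rule DERIV_chain2[OF Theta1]) (auto intro!: derivative_eq_intros)
      show ?thesis unfolding Gx_def by (rule DERIV_mult[OF d1 ht_at[OF that]])
    qed
    have "(\<lambda>b s. \<Theta> (l * x - c * s) * hb b s) b t0 = \<sigma> * Gx x b t0"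
      by (rule S1[OF t0 sigma Gb Gt GcX GbcX GtcX DcX J])
    then show ?thesis by (simp add: Gx_def)
  qed
  show ?thesis
  proof (cases "\<forall>y. \<Theta> y = 0")
    case True
    then show ?thesis by blast
  next
    case False
    then obtain y0 where y0: "\<Theta> y0 \<noteq> 0" by blast
    have hbs: "hb b t = \<sigma> * h b t" if "0 < t" for b t
    proof -
      have e: "l * ((y0 + c * t) / l) - c * t = y0" using l by (simp add: field_simps)
      from A[OF that, of "(y0 + c * t) / l" b] have "\<Theta> y0 * hb b t = \<Theta> y0 * (\<sigma> * h b t)"
        unfolding e by (simp add: ac_simps)
      then show ?thesis using y0 by simp
    qed
    have hexp: "h b t = exp (\<sigma> * b) * h 0 t" if "0 < t" for b t
    proof -
      define g where "g b = h b t * exp (- \<sigma> * b)" for b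
      have "\<forall>y. (g has_real_derivative 0) (at y)"
      proof
        fix y
        have "(g has_real_derivative hb y t * exp (- \<sigma> * y) + (exp (- \<sigma> * y) * (- \<sigma>)) * h y t) (at y)"
          unfolding g_def
          by (rule DERIV_mult[OF h_b]) (use that in \<open>auto intro!: derivative_eq_intros\<close>)
        then show "(g has_real_derivative 0) (at y)" using hbs[OF that, of y] by (simp add: algebra_simps)
      qed
      from DERIV_isconst_all[OF this, of b 0] have "h b t * exp (- \<sigma> * b) = h 0 t" by (simp add: g_def)
      moreover have "h b t = h b t * exp (- \<sigma> * b) * exp (\<sigma> * b)" by (simp add: exp_minus)
      ultimately show ?thesis by (simp add: mult.commute)
    qed
    have zz: "\<Theta> z * \<Theta>' z = 0" for z
    proof -
      define x where "x = (z + c) / l"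
      have lx: "l * x - c * 1 = z" using l by (simp add: x_def field_simps)
      define h0 where "h0 = h 0 1"
      have h0: "h0 \<noteq> 0" using h_nz[of 1 0] by (simp add: h0_def)
      obtain J where J: "is_ito_integral M \<beta> (\<lambda>s \<omega>. Gx x (\<beta> s \<omega>) s) J"
        "AE \<omega> in M. \<forall>t\<ge>0. Gx x (\<beta> t \<omega>) t = Gx x (\<beta> 0 \<omega>) 0 + integral {0..t} (\<lambda>s. Dx x (\<beta> s \<omega>) s) + \<sigma> * J t \<omega>"
        using sol[of x] by blast
      define a where "a = \<nu> * (\<Theta>'' z * l * l * h0)"
      define q where "q = \<Theta> z * \<Theta>' z * l * h0 * h0"
      have Gf: "Gx x b s = (\<Theta> (l * x - c * s) * h 0 s) * exp (\<sigma> * b)" if "1 \<le> s" for b s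
        using hexp[of s b] that by (simp add: Gx_def ac_simps)
      have Df: "Dx x b 1 = a * exp (\<sigma> * b) - q * exp (2 * \<sigma> * b)" for b
      proof -
        have hb1: "h b 1 = exp (\<sigma> * b) * h0" using hexp[of 1 b] by (simp add: h0_def)
        have "2 * \<sigma> * b = \<sigma> * b + \<sigma> * b" by simp
        then have e2: "exp (2 * \<sigma> * b) = exp (\<sigma> * b) * exp (\<sigma> * b)" by (simp only: exp_add)
        show ?thesis unfolding Dx_def lx hb1 e2 a_def q_def by (simp add: algebra_simps)
      qed
      have "q = 0" by (rule S2[OF _ sigma GcX DcX Gf Df J]) simp
      then show ?thesis using l h0 by (simp add: q_def)
    qed
    show ?thesis by (rule theta_const[OF Theta1 zz])
  qed
qed



end
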